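(* Let $A$ be a commutative unital $\mathbb K$-algebra, let $B=\mathrm{Diff}^1(A)$, and let $\mu\in L^2(B)$ be the commutator $\mu(u,v)=u\circ v-v\circ u$ of $\mathbb K$-linear endomorphisms of $A$. Then for every $n\ge 1$ and every $\omega\in\Omega^n(A)$, the element $[\mu,\omega]\in L^{n+1}(B)$ belongs to $\Omega^{n+1}(A)$, and $$[\mu,\omega]=-\,d\omega ,$$ i.e. for all $X_1,\dots,X_{n+1}\in \mathrm{Der}^1(A)$, $$[\mu,\omega](X_1,\dots,X_{n+1})=-\Big(\sum_{i=1}^{n+1}(-1)^{i-1}X_i\big(\omega(X_1,\dots,\widehat{X_i},\dots,X_{n+1})\big)+\sum_{i<j}(-1)^{i+j}\omega([X_i,X_j],X_1,\dots,\widehat{X_i},\dots,\widehat{X_j},\dots,X_{n+1})\Big).$$ In particular $\Omega(A)=\bigoplus_{n\ge1}\Omega^n(A)$ is invariant under $\partial_\mu=[\mu,\cdot\,]$.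
   Context: $\mathbb K$ denotes $\mathbb R$ or $\mathbb C$. For a $\mathbb K$-vector space $V$ and $k\ge1$, $L^k(V)$ is the space of $\mathbb K$-multilinear alternating maps $V^k\to V$; $L^0(V)=V$ and $L(V)=\bigoplus_{k\ge0}L^k(V)$. The compositional product of $\alpha\in L^m(V)$ and $\beta\in L^n(V)$ (with $m\ge 1$) is $\alpha\circ\beta\in L^{m+n-1}(V)$, $$(\alpha\circ\beta)(u_1,\dots,u_{m+n-1})=\sum_{s}\operatorname{sgn}(s)\,\alpha\big(\beta(u_{s(1)},\dots,u_{s(n)}),u_{s(n+1)},\dots,u_{s(m+n-1)}\big),$$ the sum running over permutations $s$ of $\{1,\dots,m+n-1\}$ with $s(1)<\dots<s(n)$ and $s(n+1)<\dots<s(m+n-1)$; if $m=0$ one sets $\alpha\circ\beta=0$. The bracket on $L(V)$ is, for $\alpha\in L^m(V)$, $\beta\in L^n(V)$, $$[\alpha,\beta]=(-1)^{(m+1)n}\alpha\circ\beta+(-1)^m\beta\circ\alpha .$$ For a commutative unital $\mathbb K$-algebra $A$: $\mathrm{Der}^1(A)$ is the space of $\mathbb K$-linear derivations of $A$; $A$ is identified with the multiplication operators $b\mapsto ab$ inside $\mathrm{End}_{\mathbb K}(A)$; $\mathrm{Diff}^1(A)$ is the set of $\varphi\in\mathrm{End}_{\mathbb K}(A)$ such that the commutator $\varphi\circ a-a\circ\varphi$ is a multiplication operator for every $a\in A$; one has $\mathrm{Diff}^1(A)=\mathrm{Der}^1(A)\oplus A$ via $\varphi=(\varphi-\varphi(1))+\varphi(1)$.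 For $n\ge1$, $\Omega^n(A)\subset L^n(\mathrm{Diff}^1(A))$ is the set of $\omega$ such that: (i) $\omega$ takes values in $A\subset \mathrm{Diff}^1(A)$; (ii) $\omega(u_1,\dots,u_n)=0$ whenever some $u_i$ lies in $A$; (iii) $\omega(au_1,u_2,\dots,u_n)=a\,\omega(u_1,\dots,u_n)$ for $a\in A$ and $u_1,\dots,u_n\in\mathrm{Der}^1(A)$. Such an $\omega$ is determined by its values on $\mathrm{Der}^1(A)$, and $d\omega$ denotes the element of $\Omega^{n+1}(A)$ given on derivations by the usual formula displayed in the claim (with $[X_i,X_j]$ the commutator of derivations). *)

theory Defs
  imports "HOL-Combinatorics.Permutations"
begin

text \<open>The base field K is a type 'k (class field); the commutative unital K-algebra A is a
type 'a of class comm_ring_1 together with its structure map iota : K -> A (a unital ring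
homomorphism).  An element of L^k(V) is
represented by a function on lists of arguments; only its values on lists of length k with
entries in V matter.\<close>

definition K_algebra :: "('k::field \<Rightarrow> 'a::comm_ring_1) \<Rightarrow> bool" where
  "K_algebra \<iota> \<longleftrightarrow> \<iota> 1 = 1 \<and> (\<forall>x y. \<iota> (x + y) = \<iota> x + \<iota> y) \<and> (\<forall>x y. \<iota> (x * y) = \<iota> x * \<iota> y)"

definition K_linear :: "('k::field \<Rightarrow> 'a::comm_ring_1) \<Rightarrow> ('a \<Rightarrow> 'a) \<Rightarrow> bool" where
  "K_linear \<iota> f \<longleftrightarrow> (\<forall>x y. f (x + y) = f x + f y) \<and> (\<forall>c x. f (\<iota> c * x) = \<iota> c * f x)"

text \<open>Multiplication operator b |-> a b (identification of A inside End_K(A)).\<close>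
definition mult_op :: "'a::comm_ring_1 \<Rightarrow> 'a \<Rightarrow> 'a" where
  "mult_op a = (\<lambda>b. a * b)"

definition Der1 :: "('k::field \<Rightarrow> 'a::comm_ring_1) \<Rightarrow> ('a \<Rightarrow> 'a) set" where
  "Der1 \<iota> = {D. K_linear \<iota> D \<and> (\<forall>a b. D (a * b) = a * D b + D a * b)}"

definition Diff1 :: "('k::field \<Rightarrow> 'a::comm_ring_1) \<Rightarrow> ('a \<Rightarrow> 'a) set" where
  "Diff1 \<iota> = {\<phi>. K_linear \<iota> \<phi> \<and> (\<forall>a. \<exists>c. (\<lambda>b. \<phi> (a * b) - a * \<phi> b) = mult_op c)}"

definition op_add :: "('a::comm_ring_1 \<Rightarrow> 'a) \<Rightarrow> ('a \<Rightarrow> 'a) \<Rightarrow> 'a \<Rightarrow> 'a" where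
  "op_add u v = (\<lambda>b. u b + v b)"

definition op_scale :: "('k::field \<Rightarrow> 'a::comm_ring_1) \<Rightarrow> 'k \<Rightarrow> ('a \<Rightarrow> 'a) \<Rightarrow> 'a \<Rightarrow> 'a" where
  "op_scale \<iota> c u = (\<lambda>b. \<iota> c * u b)"

definition Lk :: "('k::field \<Rightarrow> 'a::comm_ring_1) \<Rightarrow> nat \<Rightarrow> (('a \<Rightarrow> 'a) list \<Rightarrow> ('a \<Rightarrow> 'a)) \<Rightarrow> bool" where
  "Lk \<iota> k \<phi> \<longleftrightarrow>
     (\<forall>us. length us = k \<and> set us \<subseteq> Diff1 \<iota> \<longrightarrow> \<phi> us \<in> Diff1 \<iota>) \<and>
     (\<forall>us i u v. length us = k \<and> set us \<subseteq> Diff1 \<iota> \<and> i < k \<and> u \<in> Diff1 \<iota> \<and> v \<in> Diff1 \<iota> \<longrightarrow>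
         \<phi> (us[i := op_add u v]) = op_add (\<phi> (us[i := u])) (\<phi> (us[i := v]))) \<and>
     (\<forall>us i c u. length us = k \<and> set us \<subseteq> Diff1 \<iota> \<and> i < k \<and> u \<in> Diff1 \<iota> \<longrightarrow>
         \<phi> (us[i := op_scale \<iota> c u]) = op_scale \<iota> c (\<phi> (us[i := u]))) \<and>
     (\<forall>us i j. length us = k \<and> set us \<subseteq> Diff1 \<iota> \<and> i < j \<and> j < k \<and> us ! i = us ! j \<longrightarrow>
         \<phi> us = (\<lambda>b. 0))"

text \<open>(m,n)-shuffles of {0..<m+n}: permutations increasing on the first n and on the last m
positions (0-indexed version of the permutations s in the compositional product).\<close>
definition shuffles :: "nat \<Rightarrow> nat \<Rightarrow> (nat \<Rightarrow> nat) set" where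
  "shuffles n r = {s. s permutes {0..<n + r} \<and> strict_mono_on {0..<n} s \<and> strict_mono_on {n..<n + r} s}"

definition comp_prod :: "nat \<Rightarrow> nat \<Rightarrow> (('a::comm_ring_1 \<Rightarrow> 'a) list \<Rightarrow> ('a \<Rightarrow> 'a))
    \<Rightarrow> (('a \<Rightarrow> 'a) list \<Rightarrow> ('a \<Rightarrow> 'a)) \<Rightarrow> ('a \<Rightarrow> 'a) list \<Rightarrow> 'a \<Rightarrow> 'a" where
  "comp_prod m n \<alpha> \<beta> us =
     (if m = 0 then (\<lambda>b. 0) else
      (\<lambda>b. \<Sum>s\<in>shuffles n (m - 1).
          of_int (sign s) * \<alpha> (\<beta> (map (\<lambda>i. us ! s i) [0..<n]) # map (\<lambda>i. us ! s i) [n..<m + n - 1]) b))"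

definition bracket :: "nat \<Rightarrow> nat \<Rightarrow> (('a::comm_ring_1 \<Rightarrow> 'a) list \<Rightarrow> ('a \<Rightarrow> 'a))
    \<Rightarrow> (('a \<Rightarrow> 'a) list \<Rightarrow> ('a \<Rightarrow> 'a)) \<Rightarrow> ('a \<Rightarrow> 'a) list \<Rightarrow> 'a \<Rightarrow> 'a" where
  "bracket m n \<alpha> \<beta> us =
     (\<lambda>b. (-1) ^ ((m + 1) * n) * comp_prod m n \<alpha> \<beta> us b + (-1) ^ m * comp_prod n m \<beta> \<alpha> us b)"

definition mu :: "('a::comm_ring_1 \<Rightarrow> 'a) list \<Rightarrow> 'a \<Rightarrow> 'a" where
  "mu us = (\<lambda>b. (us ! 0) ((us ! 1) b) - (us ! 1) ((us ! 0) b))"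

definition Omega :: "('k::field \<Rightarrow> 'a::comm_ring_1) \<Rightarrow> nat \<Rightarrow> (('a \<Rightarrow> 'a) list \<Rightarrow> ('a \<Rightarrow> 'a)) \<Rightarrow> bool" where
  "Omega \<iota> n \<omega> \<longleftrightarrow> Lk \<iota> n \<omega> \<and>
     (\<forall>us. length us = n \<and> set us \<subseteq> Diff1 \<iota> \<longrightarrow> (\<exists>a. \<omega> us = mult_op a)) \<and>
     (\<forall>us. length us = n \<and> set us \<subseteq> Diff1 \<iota> \<and> (\<exists>i<n. us ! i \<in> range mult_op) \<longrightarrow> \<omega> us = (\<lambda>b. 0)) \<and>
     (\<forall>a us. length us = n \<and> set us \<subseteq> Der1 \<iota> \<and> 0 < n \<longrightarrow>
         \<omega> (us[0 := mult_op a \<circ> us ! 0]) = mult_op a \<circ> \<omega> us)"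

definition del_nth :: "nat \<Rightarrow> 'b list \<Rightarrow> 'b list" where
  "del_nth i xs = take i xs @ drop (Suc i) xs"

text \<open>The element (d omega)(X_1,...,X_{n+1}) of A (0-indexed: (-1)^i and (-1)^(i+j) have the
same parity as the 1-indexed signs of the paper).  The value omega(...) in A is recovered as
omega(...)(1).\<close>
definition d_val :: "(('a::comm_ring_1 \<Rightarrow> 'a) list \<Rightarrow> ('a \<Rightarrow> 'a)) \<Rightarrow> ('a \<Rightarrow> 'a) list \<Rightarrow> 'a" where
  "d_val \<omega> Xs =
     (\<Sum>i<length Xs. (-1) ^ i * (Xs ! i) (\<omega> (del_nth i Xs) 1)) +
     (\<Sum>j<length Xs. \<Sum>i<j. (-1) ^ (i + j) *
        \<omega> ((\<lambda>b. (Xs ! i) ((Xs ! j) b) - (Xs ! j) ((Xs ! i) b)) # del_nth i (del_nth j Xs)) 1)"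

end

theory Submission
  imports Defs "HOL-Library.Disjoint_Sets"
begin

primrec cyc :: "nat \<Rightarrow> nat \<Rightarrow> nat" where
  "cyc 0 = id"
| "cyc (Suc i) = Transposition.transpose i (Suc i) \<circ> cyc i"

lemma cyc_apply: "cyc i k = (if k = 0 then i else if k \<le> i then k - 1 else k)"
  by (induction i arbitrary: k) (auto simp: Transposition.transpose_def)

lemma cyc_permutes: "i < m \<Longrightarrow> cyc i permutes {0..<m}"
proof (induction i)
  case 0 then show ?case by (simp only: cyc.simps permutes_id)
next
  case (Suc i)
  then show ?case by (simp only: cyc.simps) (rule permutes_compose, auto intro: permutes_swap_id)
qed

lemma cyc_permutation: "permutation (cyc i)"
  by (induction i) (simp_all only: cyc.simps permutation_compose permutation_swap_id permutation_id)

lemma cyc_sign: "sign (cyc i) = (-1) ^ i"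
  by (induction i) (simp_all only: cyc.simps sign_compose permutation_swap_id cyc_permutation sign_swap_id sign_id, simp_all)

primrec rot :: "nat \<Rightarrow> nat \<Rightarrow> nat" where
  "rot 0 = id"
| "rot (Suc n) = rot n \<circ> Transposition.transpose n (Suc n)"

lemma rot_apply: "rot n k = (if k < n then k + 1 else if k = n then 0 else k)"
  by (induction n arbitrary: k) (auto simp: Transposition.transpose_def)

lemma rot_permutes: "n < m \<Longrightarrow> rot n permutes {0..<m}"
proof (induction n)
  case 0 then show ?case by (simp only: rot.simps permutes_id)
next
  case (Suc i)
  then show ?case by (simp only: rot.simps) (rule permutes_compose, auto intro: permutes_swap_id)
qed

lemma rot_permutation: "permutation (rot i)"
  by (induction i) (simp_all only: rot.simps permutation_compose permutation_swap_id permutation_id)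

lemma rot_sign: "sign (rot i) = (-1) ^ i"
  by (induction i) (simp_all only: rot.simps sign_compose permutation_swap_id rot_permutation sign_swap_id sign_id, simp_all)

declare cyc.simps[simp del] rot.simps[simp del]

lemma sorted_map_strict:
  assumes "sorted_wrt (<) xs" "strict_mono_on A s" "set xs \<subseteq> A"
  shows "sorted_wrt (<) (map s xs)"
  using assms
  by (induction xs) (auto simp: strict_mono_on_def)

lemma perm_unique:
  fixes s t :: "nat \<Rightarrow> nat"
  assumes s: "s permutes S" and t: "t permutes S" and fin: "finite S"
    and A: "A \<subseteq> S" and ms: "strict_mono_on A s" and mt: "strict_mono_on A t"
    and eq: "\<And>k. k \<in> S - A \<Longrightarrow> s k = t k"
  shows "s = t"
proof -
  have sS: "s ` S = S" and tS: "t ` S = S" using s t permutes_image by blast+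
  have is': "inj_on s S" and it: "inj_on t S" using s t permutes_inj_on by blast+
  have e1: "s ` (S - A) = t ` (S - A)" using eq by (auto simp: image_def) 
  have "s ` A = S - s ` (S - A)" using sS is' A by (auto simp: inj_on_def) blast+
  moreover have "t ` A = S - t ` (S - A)" using tS it A by (auto simp: inj_on_def) blast+
  ultimately have img: "s ` A = t ` A" using e1 by simp
  have finA: "finite A" using fin A finite_subset by blast
  define xs where "xs = sorted_list_of_set A"
  have xs: "sorted_wrt (<) xs" "set xs = A" using finA by (auto simp: xs_def)
  have "map s xs = map t xs"
  proof (rule sorted_distinct_set_unique)
    show "sorted (map s xs)" "distinct (map s xs)"
      using sorted_map_strict[OF xs(1) ms] xs(2) strict_sorted_iff by auto
    show "sorted (map t xs)" "distinct (map t xs)"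
      using sorted_map_strict[OF xs(1) mt] xs(2) strict_sorted_iff by auto
    show "set (map s xs) = set (map t xs)" using img xs(2) by simp
  qed
  then have "\<And>k. k \<in> A \<Longrightarrow> s k = t k" using xs(2) by (auto simp: map_eq_conv)
  then show ?thesis
    using eq s t by (metis DiffI ext permutes_def)
qed

definition sig1 :: "nat \<Rightarrow> nat \<Rightarrow> nat \<Rightarrow> nat" where
  "sig1 n i = cyc i \<circ> rot n"

definition tau2 :: "nat \<Rightarrow> nat \<Rightarrow> nat \<Rightarrow> nat" where
  "tau2 i j = cyc j \<circ> cyc (Suc i)"

lemma sig1_in: "i \<le> n \<Longrightarrow> sig1 n i \<in> shuffles n 1"
  unfolding shuffles_def sig1_def
  by (auto simp: permutes_compose cyc_permutes rot_permutes strict_mono_on_def cyc_apply rot_apply)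

lemma tau2_in: "i < j \<Longrightarrow> j < Suc n \<Longrightarrow> n \<ge> 1 \<Longrightarrow> tau2 i j \<in> shuffles 2 (n - 1)"
  unfolding shuffles_def tau2_def
  by (auto simp: permutes_compose cyc_permutes strict_mono_on_def cyc_apply)

lemma shuffles1: "shuffles n 1 = sig1 n ` {..n}"
proof
  show "sig1 n ` {..n} \<subseteq> shuffles n 1" using sig1_in by auto
  show "shuffles n 1 \<subseteq> sig1 n ` {..n}"
  proof
    fix s assume s: "s \<in> shuffles n 1"
    have sp: "s permutes {0..<n+1}" using s by (simp add: shuffles_def)
    have "s n \<in> {0..<n+1}" using permutes_in_image[OF sp] by simp
    then have sn: "s n \<le> n" by simp
    have "s = sig1 n (s n)"
    proof (rule perm_unique[OF sp _ _ _ _ _])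
      show "sig1 n (s n) permutes {0..<n+1}" using sig1_in[OF sn] by (simp add: shuffles_def)
      show "strict_mono_on {0..<n} s" using s by (simp add: shuffles_def)
      show "strict_mono_on {0..<n} (sig1 n (s n))" using sig1_in[OF sn] by (simp add: shuffles_def)
      fix k assume "k \<in> {0..<n+1} - {0..<n}"
      then have "k = n" by auto
      then show "s k = sig1 n (s n) k" by (simp add: sig1_def cyc_apply rot_apply)
    qed auto
    then show "s \<in> sig1 n ` {..n}" using sn by blast
  qed
qed

lemma shuffles2: 
  assumes "n \<ge> 1"
  shows "shuffles 2 (n - 1) = (\<lambda>(j, i). tau2 i j) ` (SIGMA j:{..<Suc n}. {..<j})"
proof
  show "(\<lambda>(j, i). tau2 i j) ` (SIGMA j:{..<Suc n}. {..<j}) \<subseteq> shuffles 2 (n - 1)"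
    using tau2_in assms by auto
  show "shuffles 2 (n - 1) \<subseteq> (\<lambda>(j, i). tau2 i j) ` (SIGMA j:{..<Suc n}. {..<j})"
  proof
    fix s assume s: "s \<in> shuffles 2 (n - 1)"
    have nn: "2 + (n - 1) = Suc n" using assms by simp
    have sp: "s permutes {0..<Suc n}" using s nn by (simp add: shuffles_def)
    have "s 1 \<in> {0..<Suc n}" using permutes_in_image[OF sp] assms by simp
    then have s1: "s 1 < Suc n" by simp
    have "s 0 < s 1" using s by (simp add: shuffles_def strict_mono_on_def)
    have "s = tau2 (s 0) (s 1)"
    proof (rule perm_unique[OF sp _ _ _ _ _])
      show "tau2 (s 0) (s 1) permutes {0..<Suc n}" using tau2_in[OF \<open>s 0 < s 1\<close> s1 assms] nn
        by (simp add: shuffles_def)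
      show "strict_mono_on {2..<Suc n} s" using s nn by (simp add: shuffles_def)
      show "strict_mono_on {2..<Suc n} (tau2 (s 0) (s 1))" 
        using tau2_in[OF \<open>s 0 < s 1\<close> s1 assms] nn by (simp add: shuffles_def)
      fix k assume "k \<in> {0..<Suc n} - {2..<Suc n}"
      then have "k = 0 \<or> k = 1" by auto
      then show "s k = tau2 (s 0) (s 1) k" using \<open>s 0 < s 1\<close> by (auto simp: tau2_def cyc_apply)
    qed auto
    then show "s \<in> (\<lambda>(j, i). tau2 i j) ` (SIGMA j:{..<Suc n}. {..<j})"
      using s1 \<open>s 0 < s 1\<close> by (auto simp: image_iff intro!: bexI[of _ "(s 1, s 0)"])
  qed
qed


lemma del_nth_length[simp]: "i < length xs \<Longrightarrow> length (del_nth i xs) = length xs - 1"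
  by (simp add: del_nth_def)

lemma del_nth_nth: "i < length xs \<Longrightarrow> k < length xs - 1 \<Longrightarrow>
   del_nth i xs ! k = (if k < i then xs ! k else xs ! Suc k)"
  by (auto simp: del_nth_def nth_append min_def)

lemma map_sig1: "length us = Suc n \<Longrightarrow> i \<le> n \<Longrightarrow>
   map (\<lambda>k. us ! sig1 n i k) [0..<n] = del_nth i us"
  by (rule nth_equalityI) (auto simp: del_nth_nth sig1_def cyc_apply rot_apply)

lemma sig1_n: "sig1 n i n = i"
  by (simp add: sig1_def cyc_apply rot_apply)

lemma map_tau2: "i < j \<Longrightarrow> j < length us \<Longrightarrow>
   map (\<lambda>k. us ! tau2 i j k) [2..<length us] = del_nth i (del_nth j us)"
  by (rule nth_equalityI) (auto simp: del_nth_nth tau2_def cyc_apply)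

lemma sign_sig1: "sign (sig1 n i) = (-1) ^ (i + n)"
  by (simp add: sig1_def sign_compose cyc_permutation rot_permutation cyc_sign rot_sign power_add)

lemma sign_tau2: "sign (tau2 i j) = (-1) ^ (Suc i + j)"
  by (simp add: tau2_def sign_compose cyc_permutation cyc_sign power_add)

definition comm :: "('a::comm_ring_1 \<Rightarrow> 'a) \<Rightarrow> ('a \<Rightarrow> 'a) \<Rightarrow> 'a \<Rightarrow> 'a" where
  "comm u v = (\<lambda>c. u (v c) - v (u c))"

definition G :: "(('a::comm_ring_1 \<Rightarrow> 'a) list \<Rightarrow> ('a \<Rightarrow> 'a)) \<Rightarrow> ('a \<Rightarrow> 'a) list \<Rightarrow> 'a \<Rightarrow> 'a" where
  "G \<omega> us = (\<lambda>b. (\<Sum>i<length us. (-1) ^ i * (\<omega> (del_nth i us) ((us ! i) b) - (us ! i) (\<omega> (del_nth i us) b)))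
      - (\<Sum>j<length us. \<Sum>i<j. (-1) ^ (i + j) * \<omega> (comm (us ! i) (us ! j) # del_nth i (del_nth j us)) b))"

lemma cp1:
  assumes "length us = Suc n"
  shows "comp_prod 2 n mu \<omega> us = (\<lambda>b. \<Sum>i<Suc n. (-1) ^ (i + n) *
            (\<omega> (del_nth i us) ((us ! i) b) - (us ! i) (\<omega> (del_nth i us) b)))"
proof -
  have inj: "inj_on (sig1 n) {..n}" by (metis inj_onI sig1_n)
  define F where "F s b = of_int (sign s) * mu [\<omega> (map (\<lambda>i. us ! s i) [0..<n]), us ! s n] b" for s b
  have "comp_prod 2 n mu \<omega> us = (\<lambda>b. \<Sum>s\<in>shuffles n 1. F s b)"
    unfolding comp_prod_def F_def by simp
  also have "\<dots> = (\<lambda>b. \<Sum>i\<in>{..n}. F (sig1 n i) b)"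
    by (simp only: shuffles1 sum.reindex[OF inj] o_def)
  also have "\<dots> = (\<lambda>b. \<Sum>i<Suc n. (-1) ^ (i + n) *
            (\<omega> (del_nth i us) ((us ! i) b) - (us ! i) (\<omega> (del_nth i us) b)))"
    unfolding F_def lessThan_Suc_atMost using assms
    by (simp add: map_sig1 sig1_n sign_sig1 mu_def)
  finally show ?thesis .
qed

lemma cp2:
  assumes "length us = Suc n" "n \<ge> 1"
  shows "comp_prod n 2 \<omega> mu us = (\<lambda>b. \<Sum>j<Suc n. \<Sum>i<j. (-1) ^ (Suc i + j) *
            \<omega> (comm (us ! i) (us ! j) # del_nth i (del_nth j us)) b)"
proof -
  have inj: "inj_on (\<lambda>(j, i). tau2 i j) (SIGMA j:{..<Suc n}. {..<j})"
  proof (rule inj_onI, clarsimp)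
    fix i j i' j' assume "tau2 i j = tau2 i' j'" "i < j" "i' < j'"
    then have "tau2 i j 0 = tau2 i' j' 0" "tau2 i j 1 = tau2 i' j' 1" by simp_all
    then show "j = j' \<and> i = i'" using \<open>i < j\<close> \<open>i' < j'\<close> by (auto simp: tau2_def cyc_apply)
  qed
  have e: "n + 2 - 1 = Suc n" by simp
  define F where "F s b = of_int (sign s) *
      \<omega> (mu (map (\<lambda>i. us ! s i) [0..<2]) # map (\<lambda>i. us ! s i) [2..<Suc n]) b" for s b
  have "comp_prod n 2 \<omega> mu us = (\<lambda>b. \<Sum>s\<in>shuffles 2 (n - 1). F s b)"
    unfolding comp_prod_def e F_def using assms by simp
  also have "\<dots> = (\<lambda>b. \<Sum>(j, i)\<in>(SIGMA j:{..<Suc n}. {..<j}). F (tau2 i j) b)"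
    unfolding shuffles2[OF assms(2)] sum.reindex[OF inj] by (simp add: o_def case_prod_beta')
  also have "\<dots> = (\<lambda>b. \<Sum>(j, i)\<in>(SIGMA j:{..<Suc n}. {..<j}). (-1) ^ (Suc i + j) *
            \<omega> (comm (us ! i) (us ! j) # del_nth i (del_nth j us)) b)"
  proof (rule ext, rule sum.cong, simp, clarify)
    fix b j i assume ij: "j < Suc n" "i < j"
    have m: "map (\<lambda>k. us ! tau2 i j k) [2..<Suc n] = del_nth i (del_nth j us)"
      using map_tau2[of i j us] ij assms by simp
    have "map (\<lambda>k. us ! tau2 i j k) [0..<2] = [us ! i, us ! j]"
      using ij by (simp add: upt_rec tau2_def cyc_apply)
    then show "F (tau2 i j) b = (-1) ^ (Suc i + j) *
            \<omega> (comm (us ! i) (us ! j) # del_nth i (del_nth j us)) b"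
      unfolding F_def m by (simp add: sign_tau2 mu_def comm_def)
  qed
  also have "\<dots> = (\<lambda>b. \<Sum>j<Suc n. \<Sum>i<j. (-1) ^ (Suc i + j) *
            \<omega> (comm (us ! i) (us ! j) # del_nth i (del_nth j us)) b)"
    by (rule ext, subst sum.Sigma) auto
  finally show ?thesis .
qed

lemma sgn_aux: "(-1::'a::comm_ring_1) ^ (3 * n) * (-1) ^ (i + n) = (-1) ^ i"
proof -
  have "(-1::'a) ^ (3 * n) * (-1) ^ (i + n) = (-1) ^ (2 * (2 * n) + i)"
    by (simp add: power_add[symmetric] algebra_simps)
  also have "\<dots> = (-1) ^ i" by (simp add: power_add power_mult)
  finally show ?thesis .
qed

lemma closed_form:
  assumes "length us = Suc n" "n \<ge> 1"
  shows "bracket 2 n mu \<omega> us = G \<omega> us"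
proof -
  have s: "(-1::'a) ^ (Suc i + j) = - ((-1) ^ (i + j))" for i j by simp
  show ?thesis
  unfolding bracket_def cp1[OF assms(1)] cp2[OF assms] G_def assms(1)
  by (simp add: sum_distrib_left mult.assoc[symmetric] sgn_aux s sum_negf del: sum.lessThan_Suc)
qed


section \<open>Basic facts about Diff1 and Der1\<close>

lemma diff1_add: "u \<in> Diff1 \<iota> \<Longrightarrow> u (x + y) = u x + u y"
  by (simp add: Diff1_def K_linear_def)

lemma diff1_scale: "u \<in> Diff1 \<iota> \<Longrightarrow> u (\<iota> c * x) = \<iota> c * u x"
  by (simp add: Diff1_def K_linear_def)

lemma diff1_zero: "u \<in> Diff1 \<iota> \<Longrightarrow> u 0 = 0"
  using diff1_add[of u \<iota> 0 0] by simp

lemma diff1_minus: "u \<in> Diff1 \<iota> \<Longrightarrow> u (- x) = - u x"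
  using diff1_add[of u \<iota> x "- x"] diff1_zero[of u \<iota>] by (simp add: add_eq_0_iff)

lemma diff1_diff: "u \<in> Diff1 \<iota> \<Longrightarrow> u (x - y) = u x - u y"
  using diff1_add[of u \<iota> x "- y"] diff1_minus[of u \<iota> y] by simp

lemma diff1_sum: "u \<in> Diff1 \<iota> \<Longrightarrow> u (\<Sum>i\<in>I. f i) = (\<Sum>i\<in>I. u (f i))"
  by (induction I rule: infinite_finite_induct) (auto simp: diff1_zero diff1_add)

lemma diff1_pm1: "u \<in> Diff1 \<iota> \<Longrightarrow> u ((-1) ^ k * x) = (-1) ^ k * u x"
  by (induction k arbitrary: x) (auto simp: diff1_minus)

lemma diff1_commD: "u \<in> Diff1 \<iota> \<Longrightarrow> \<exists>c. \<forall>b. u (a * b) = a * u b + c * b"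
proof -
  assume "u \<in> Diff1 \<iota>"
  then obtain c where "(\<lambda>b. u (a * b) - a * u b) = mult_op c" by (auto simp: Diff1_def)
  then have "\<forall>b. u (a * b) = a * u b + c * b" by (metis (no_types) diff_add_cancel mult_op_def add.commute)
  then show ?thesis by blast
qed

lemma diff1I:
  assumes "\<And>x y. u (x + y) = u x + u y" "\<And>c x. u (\<iota> c * x) = \<iota> c * u x"
    and "\<And>a. \<exists>c. \<forall>b. u (a * b) = a * u b + c * b"
  shows "u \<in> Diff1 \<iota>"
proof -
  have "\<exists>c. (\<lambda>b. u (a * b) - a * u b) = mult_op c" for a
  proof -
    obtain c where "\<forall>b. u (a * b) = a * u b + c * b" using assms(3) by blast
    then show ?thesis by (auto simp: mult_op_def fun_eq_iff)
  qed
  then show ?thesis using assms(1,2) by (auto simp: Diff1_def K_linear_def)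
qed

lemma mult_op_Diff1: "mult_op a \<in> Diff1 \<iota>"
  by (rule diff1I) (auto simp: mult_op_def algebra_simps intro: exI[of _ 0])

lemma zero_Diff1: "(\<lambda>b. 0) \<in> Diff1 \<iota>"
  using mult_op_Diff1[of 0 \<iota>] by (simp add: mult_op_def)

lemma op_add_Diff1: "u \<in> Diff1 \<iota> \<Longrightarrow> v \<in> Diff1 \<iota> \<Longrightarrow> op_add u v \<in> Diff1 \<iota>"
proof (rule diff1I)
  assume u: "u \<in> Diff1 \<iota>" and v: "v \<in> Diff1 \<iota>"
  show "op_add u v (x + y) = op_add u v x + op_add u v y" for x y
    by (simp add: op_add_def diff1_add[OF u] diff1_add[OF v])
  show "op_add u v (\<iota> c * x) = \<iota> c * op_add u v x" for c x
    by (simp add: op_add_def diff1_scale[OF u] diff1_scale[OF v] distrib_left)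
  fix a
  obtain c where c: "\<forall>b. u (a * b) = a * u b + c * b" using diff1_commD[OF u] by blast
  obtain d where d: "\<forall>b. v (a * b) = a * v b + d * b" using diff1_commD[OF v] by blast
  show "\<exists>e. \<forall>b. op_add u v (a * b) = a * op_add u v b + e * b"
    by (rule exI[of _ "c + d"]) (simp only: op_add_def c[rule_format] d[rule_format], simp add: algebra_simps)
qed

lemma op_scale_Diff1: "u \<in> Diff1 \<iota> \<Longrightarrow> op_scale \<iota> k u \<in> Diff1 \<iota>"
proof (rule diff1I)
  assume u: "u \<in> Diff1 \<iota>"
  show "op_scale \<iota> k u (x + y) = op_scale \<iota> k u x + op_scale \<iota> k u y" for x y
    by (simp add: op_scale_def diff1_add[OF u] algebra_simps)
  show "op_scale \<iota> k u (\<iota> c * x) = \<iota> c * op_scale \<iota> k u x" for c x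
    by (simp add: op_scale_def diff1_scale[OF u] mult.left_commute)
  fix a
  obtain c where c: "\<forall>b. u (a * b) = a * u b + c * b" using diff1_commD[OF u] by blast
  show "\<exists>e. \<forall>b. op_scale \<iota> k u (a * b) = a * op_scale \<iota> k u b + e * b"
    by (rule exI[of _ "\<iota> k * c"]) (simp only: op_scale_def c[rule_format], simp add: algebra_simps)
qed

lemma comm_Diff1: "u \<in> Diff1 \<iota> \<Longrightarrow> v \<in> Diff1 \<iota> \<Longrightarrow> comm u v \<in> Diff1 \<iota>"
proof (rule diff1I)
  assume u: "u \<in> Diff1 \<iota>" and v: "v \<in> Diff1 \<iota>"
  show "comm u v (x + y) = comm u v x + comm u v y" for x y
    by (simp add: comm_def diff1_add[OF u] diff1_add[OF v])
  show "comm u v (\<iota> c * x) = \<iota> c * comm u v x" for c x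
    by (simp add: comm_def diff1_scale[OF u] diff1_scale[OF v] right_diff_distrib)
  fix a
  obtain p where p: "\<forall>b. u (a * b) = a * u b + p * b" using diff1_commD[OF u] by blast
  obtain q where q: "\<forall>b. v (a * b) = a * v b + q * b" using diff1_commD[OF v] by blast
  obtain r where r: "\<forall>b. u (q * b) = q * u b + r * b" using diff1_commD[OF u] by blast
  obtain s where s: "\<forall>b. v (p * b) = p * v b + s * b" using diff1_commD[OF v] by blast
  show "\<exists>e. \<forall>b. comm u v (a * b) = a * comm u v b + e * b"
    by (rule exI[of _ "r - s"]) (simp only: comm_def p[rule_format] q[rule_format] r[rule_format] s[rule_format] diff1_add[OF u] diff1_add[OF v], simp add: algebra_simps)
qed

lemma set_upd_sub: "set us \<subseteq> S \<Longrightarrow> x \<in> S \<Longrightarrow> set (us[i := x]) \<subseteq> S"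
  by (metis set_update_subset_insert insert_subset subset_trans)

lemma der1D: "X \<in> Der1 \<iota> \<Longrightarrow> X (a * b) = a * X b + X a * b"
  by (simp add: Der1_def)

lemma der1_Diff1: "X \<in> Der1 \<iota> \<Longrightarrow> X \<in> Diff1 \<iota>"
  by (rule diff1I) (auto simp: Der1_def K_linear_def)

lemma der1_one: "X \<in> Der1 \<iota> \<Longrightarrow> X 1 = 0"
  using der1D[of X \<iota> 1 1] by simp

lemma der1_comm: "X \<in> Der1 \<iota> \<Longrightarrow> Y \<in> Der1 \<iota> \<Longrightarrow> comm X Y \<in> Der1 \<iota>"
proof -
  assume X: "X \<in> Der1 \<iota>" and Y: "Y \<in> Der1 \<iota>"
  have "comm X Y \<in> Diff1 \<iota>" using comm_Diff1 der1_Diff1 X Y by blast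
  moreover have "comm X Y (a * b) = a * comm X Y b + comm X Y a * b" for a b
    using X Y der1_Diff1[OF X] der1_Diff1[OF Y]
    by (simp add: comm_def der1D[OF X] der1D[OF Y] diff1_add algebra_simps)
  ultimately show ?thesis by (simp add: Der1_def Diff1_def)
qed

lemma der1_mult: "X \<in> Der1 \<iota> \<Longrightarrow> mult_op a \<circ> X \<in> Der1 \<iota>"
proof -
  assume X: "X \<in> Der1 \<iota>"
  have D: "X \<in> Diff1 \<iota>" using der1_Diff1[OF X] .
  have "(mult_op a \<circ> X) (\<iota> c * x) = \<iota> c * (mult_op a \<circ> X) x" for c x
    by (simp only: o_def mult_op_def diff1_scale[OF D], simp add: algebra_simps)
  then show ?thesis
    unfolding Der1_def K_linear_def
    by (simp add: mult_op_def diff1_add[OF D] der1D[OF X] algebra_simps)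
qed


lemma alt_swap:
  fixes f :: "('a::comm_ring_1 \<Rightarrow> 'a) list \<Rightarrow> 'a \<Rightarrow> 'a"
  assumes cl: "\<And>u v. u \<in> S \<Longrightarrow> v \<in> S \<Longrightarrow> op_add u v \<in> S"
    and add: "\<And>us i u v. length us = k \<Longrightarrow> set us \<subseteq> S \<Longrightarrow> i < k \<Longrightarrow> u \<in> S \<Longrightarrow> v \<in> S \<Longrightarrow>
        f (us[i := op_add u v]) = op_add (f (us[i := u])) (f (us[i := v]))"
    and adj: "\<And>vs. length vs = k \<Longrightarrow> set vs \<subseteq> S \<Longrightarrow> vs ! i = vs ! j \<Longrightarrow> f vs = (\<lambda>b. 0)"
    and us: "length us = k" "set us \<subseteq> S" "i < k" "j < k" "i \<noteq> j"
  shows "f (us[i := us ! j, j := us ! i]) b = - f us b"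
proof -
  define x where "x = us ! i"
  define y where "y = us ! j"
  have xS: "x \<in> S" and yS: "y \<in> S" using us by (auto simp: x_def y_def)
  have xy: "op_add x y \<in> S" using cl xS yS by blast
  define V where "V = us[j := op_add x y]"
  have V: "length V = k" "set V \<subseteq> S" using us xy by (auto simp: V_def set_upd_sub)
  have "f (V[i := op_add x y]) = (\<lambda>b. 0)"
    by (rule adj) (use V us xy in \<open>auto simp: V_def set_upd_sub nth_list_update\<close>)
  moreover have "f (V[i := op_add x y]) = op_add (f (V[i := x])) (f (V[i := y]))"
    using add V us xS yS by simp
  moreover have "V[i := x] = us[j := op_add x y]" using us by (simp add: V_def x_def list_update_swap)
  moreover have "f (us[j := op_add x y]) = op_add (f (us[j := x])) (f (us[j := y]))"
    using add us xS yS by simp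
  moreover have "us[j := y] = us" by (simp add: y_def)
  moreover have "f (us[j := x]) = (\<lambda>b. 0)"
    by (rule adj) (use us xS in \<open>auto simp: x_def set_upd_sub nth_list_update\<close>)
  moreover have "V[i := y] = (us[i := y])[j := op_add x y]" using us by (simp add: V_def list_update_swap)
  moreover have "f ((us[i := y])[j := op_add x y]) =
      op_add (f ((us[i := y])[j := x])) (f ((us[i := y])[j := y]))"
    using add us xS yS by (simp add: set_upd_sub)
  moreover have "f ((us[i := y])[j := y]) = (\<lambda>b. 0)"
    by (rule adj) (use us yS in \<open>auto simp: set_upd_sub nth_list_update\<close>)
  ultimately have "f us b + f (us[i := y, j := x]) b = 0"
    by (auto simp: op_add_def fun_eq_iff)
  then show ?thesis by (simp add: x_def y_def add_eq_0_iff)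
qed

lemma alt_all:
  fixes f :: "('a::comm_ring_1 \<Rightarrow> 'a) list \<Rightarrow> 'a \<Rightarrow> 'a"
  assumes cl: "\<And>u v. u \<in> S \<Longrightarrow> v \<in> S \<Longrightarrow> op_add u v \<in> S"
    and add: "\<And>us i u v. length us = k \<Longrightarrow> set us \<subseteq> S \<Longrightarrow> i < k \<Longrightarrow> u \<in> S \<Longrightarrow> v \<in> S \<Longrightarrow>
        f (us[i := op_add u v]) = op_add (f (us[i := u])) (f (us[i := v]))"
    and adj: "\<And>us i. length us = k \<Longrightarrow> set us \<subseteq> S \<Longrightarrow> Suc i < k \<Longrightarrow> us ! i = us ! Suc i \<Longrightarrow>
        f us = (\<lambda>b. 0)"
  shows "length us = k \<Longrightarrow> set us \<subseteq> S \<Longrightarrow> i < j \<Longrightarrow> j < k \<Longrightarrow> us ! i = us ! j \<Longrightarrow> f us = (\<lambda>b. 0)"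
proof (induction j arbitrary: us)
  case 0 then show ?case by simp
next
  case (Suc j)
  show ?case
  proof (cases "j = i")
    case True then show ?thesis using adj Suc.prems by simp
  next
    case False
    then have ij: "i < j" using Suc.prems by simp
    define us' where "us' = us[j := us ! Suc j, Suc j := us ! j]"
    have l: "length us' = k" "set us' \<subseteq> S" using Suc.prems
      by (auto simp: us'_def set_upd_sub)
    have "f us' = (\<lambda>b. 0)"
      by (rule Suc.IH) (use l ij Suc.prems in \<open>auto simp: us'_def nth_list_update\<close>)
    moreover have "us'[j := us' ! Suc j, Suc j := us' ! j] = us"
      using Suc.prems by (auto simp: us'_def nth_list_update list_update_swap intro!: nth_equalityI)
    moreover have "f (us'[j := us' ! Suc j, Suc j := us' ! j]) b = - f us' b" for b
    proof (rule alt_swap[of S k f, OF cl add _ l])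
      show "\<And>vs. length vs = k \<Longrightarrow> set vs \<subseteq> S \<Longrightarrow> vs ! j = vs ! Suc j \<Longrightarrow> f vs = (\<lambda>b. 0)"
        using adj Suc.prems by simp
    qed (use Suc.prems in auto)
    ultimately show ?thesis by (metis neg_equal_0_iff_equal)
  qed
qed


lemma del_nth_update: assumes i: "i < length xs" shows "del_nth i (xs[p := x]) =
   (if p = i then del_nth i xs else if p < i then (del_nth i xs)[p := x] else (del_nth i xs)[p - 1 := x])"
proof (cases "p < length xs")
  case False
  then show ?thesis using i by (auto simp: list_update_beyond)
next
  case True
  show ?thesis
    by (rule nth_equalityI) (use i True in \<open>auto simp: del_nth_nth nth_list_update\<close>)
qed

lemma del_nth_set: "set (del_nth i xs) \<subseteq> set xs"
  unfolding del_nth_def using set_take_subset set_drop_subset by fastforce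

lemma del_nth_pos: "i < length xs \<Longrightarrow> p < length xs \<Longrightarrow> p \<noteq> i \<Longrightarrow>
   del_nth i xs ! (if p < i then p else p - 1) = xs ! p \<and> (if p < i then p else p - 1) < length xs - 1"
  by (auto simp: del_nth_nth)

lemma del_nth_mem: "i < length xs \<Longrightarrow> p < length xs \<Longrightarrow> p \<noteq> i \<Longrightarrow> xs ! p \<in> set (del_nth i xs)"
  using del_nth_pos[of i xs p] by (metis del_nth_length nth_mem)

lemma del_nth_adj_eq: "Suc p < length xs \<Longrightarrow> xs ! p = xs ! Suc p \<Longrightarrow> del_nth p xs = del_nth (Suc p) xs"
  apply (rule nth_equalityI)
   apply simp
  subgoal for i by (cases "i = p") (auto simp: del_nth_nth)
  done

lemma del_nth_adj_keep: "Suc q < length xs \<Longrightarrow> xs ! q = xs ! Suc q \<Longrightarrow> i < length xs \<Longrightarrow> i \<noteq> q \<Longrightarrow> i \<noteq> Suc q \<Longrightarrow>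
   (let q' = (if i < q then q - 1 else q) in
      del_nth i xs ! q' = del_nth i xs ! Suc q' \<and> Suc q' < length (del_nth i xs))"
  by (auto simp: del_nth_nth Let_def)

lemma del_nth_0: "xs \<noteq> [] \<Longrightarrow> del_nth 0 xs = tl xs"
  by (simp add: del_nth_def drop_Suc)


definition T1 :: "(('a::comm_ring_1 \<Rightarrow> 'a) list \<Rightarrow> ('a \<Rightarrow> 'a)) \<Rightarrow> ('a \<Rightarrow> 'a) list \<Rightarrow> nat \<Rightarrow> 'a \<Rightarrow> 'a" where
  "T1 \<omega> us i b = \<omega> (del_nth i us) ((us ! i) b) - (us ! i) (\<omega> (del_nth i us) b)"

definition T2 :: "(('a::comm_ring_1 \<Rightarrow> 'a) list \<Rightarrow> ('a \<Rightarrow> 'a)) \<Rightarrow> ('a \<Rightarrow> 'a) list \<Rightarrow> nat \<Rightarrow> nat \<Rightarrow> 'a \<Rightarrow> 'a" where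
  "T2 \<omega> us i j b = \<omega> (comm (us ! i) (us ! j) # del_nth i (del_nth j us)) b"

lemma G_T: "G \<omega> us b = (\<Sum>i<length us. (-1) ^ i * T1 \<omega> us i b) -
    (\<Sum>j<length us. \<Sum>i<j. (-1) ^ (i + j) * T2 \<omega> us i j b)"
  by (simp add: G_def T1_def T2_def)

lemma del1_upd: "i < length xs \<Longrightarrow> p < length xs \<Longrightarrow> p \<noteq> i \<Longrightarrow>
   \<exists>q < length xs - 1. \<forall>x. del_nth i (xs[p := x]) = (del_nth i xs)[q := x]"
  by (rule exI[of _ "if p < i then p else p - 1"]) (auto simp: del_nth_update)

lemma del2_upd: "i < j \<Longrightarrow> j < length xs \<Longrightarrow> p < length xs \<Longrightarrow> p \<noteq> i \<Longrightarrow> p \<noteq> j \<Longrightarrow>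
   \<exists>q < length xs - 2. \<forall>x. del_nth i (del_nth j (xs[p := x])) = (del_nth i (del_nth j xs))[q := x]"
proof -
  assume a: "i < j" "j < length xs" "p < length xs" "p \<noteq> i" "p \<noteq> j"
  define q1 where "q1 = (if p < j then p else p - 1)"
  have 1: "del_nth j (xs[p := x]) = (del_nth j xs)[q1 := x]" for x
    using a by (auto simp: del_nth_update q1_def)
  have q1: "q1 < length (del_nth j xs)" "q1 \<noteq> i" using a by (auto simp: q1_def)
  have il: "i < length (del_nth j xs)" using a by simp
  obtain q where "q < length (del_nth j xs) - 1" "\<forall>x. del_nth i ((del_nth j xs)[q1 := x]) = (del_nth i (del_nth j xs))[q := x]"
    using del1_upd[OF il q1(1) q1(2)] by blast
  then show ?thesis using 1 a by (intro exI[of _ q]) auto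
qed

lemma del2_upd_ij: "i < j \<Longrightarrow> j < length xs \<Longrightarrow> p = i \<or> p = j \<Longrightarrow>
   del_nth i (del_nth j (xs[p := x])) = del_nth i (del_nth j xs)"
  by (auto simp: del_nth_update)

lemma del2_len: "i < j \<Longrightarrow> j < length xs \<Longrightarrow> length (del_nth i (del_nth j xs)) = length xs - 2"
  by simp

lemma del2_set: "set (del_nth i (del_nth j xs)) \<subseteq> set xs"
  using del_nth_set by (metis subset_trans)

lemma comm_add1: "w \<in> Diff1 \<iota> \<Longrightarrow> comm (op_add u v) w = op_add (comm u w) (comm v w)"
  by (auto simp: comm_def op_add_def fun_eq_iff diff1_add)

lemma comm_add2: "w \<in> Diff1 \<iota> \<Longrightarrow> comm w (op_add u v) = op_add (comm w u) (comm w v)"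
  by (auto simp: comm_def op_add_def fun_eq_iff diff1_add)

lemma comm_scale1: "w \<in> Diff1 \<iota> \<Longrightarrow> comm (op_scale \<iota> c u) w = op_scale \<iota> c (comm u w)"
  by (auto simp: comm_def op_scale_def fun_eq_iff diff1_scale right_diff_distrib)

lemma comm_scale2: "w \<in> Diff1 \<iota> \<Longrightarrow> comm w (op_scale \<iota> c u) = op_scale \<iota> c (comm w u)"
  by (auto simp: comm_def op_scale_def fun_eq_iff diff1_scale right_diff_distrib)

lemma comm_mult1: "w \<in> Diff1 \<iota> \<Longrightarrow> \<exists>e. comm (mult_op a) w = mult_op e"
proof -
  assume w: "w \<in> Diff1 \<iota>"
  obtain q where q: "\<forall>b. w (a * b) = a * w b + q * b" using diff1_commD[OF w] by blast
  show ?thesis by (rule exI[of _ "- q"]) (auto simp: comm_def mult_op_def fun_eq_iff q)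
qed

lemma comm_mult2: "w \<in> Diff1 \<iota> \<Longrightarrow> \<exists>e. comm w (mult_op a) = mult_op e"
proof -
  assume w: "w \<in> Diff1 \<iota>"
  obtain q where q: "\<forall>b. w (a * b) = a * w b + q * b" using diff1_commD[OF w] by blast
  show ?thesis by (rule exI[of _ "q"]) (auto simp: comm_def mult_op_def fun_eq_iff q)
qed


lemma sum_inv_zero:
  fixes f :: "'b \<Rightarrow> 'a::comm_ring_1"
  assumes "finite X" "\<And>x. x \<in> X \<Longrightarrow> h x \<in> X" "\<And>x. x \<in> X \<Longrightarrow> h (h x) = x"
    "\<And>x. x \<in> X \<Longrightarrow> h x = x \<Longrightarrow> f x = 0" "\<And>x. x \<in> X \<Longrightarrow> h x \<noteq> x \<Longrightarrow> f (h x) + f x = 0"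
  shows "sum f X = 0"
proof -
  have "sum f X = sum f {x\<in>X. h x \<noteq> x}" by (rule sum.mono_neutral_right) (use assms in auto)
  also have "\<dots> = 0"
  proof (rule sum_involution_eq_0)
    fix x assume x: "x \<in> {x \<in> X. h x \<noteq> x}"
    then show "f (h x) + f x = 0" using assms(5) by blast
    show "h x \<in> {x \<in> X. h x \<noteq> x}" using x assms(2,3) by force
    show "h (h x) = x" using x assms(3) by blast
    show "h x \<noteq> x" using x by blast
  qed
  finally show ?thesis .
qed


lemma tr_fix: "Transposition.transpose (p::nat) (Suc p) i = i \<Longrightarrow> i \<noteq> p \<and> i \<noteq> Suc p"
  unfolding Transposition.transpose_def by (cases "i = p"; cases "i = Suc p") simp_all
lemma tr_nfix: "Transposition.transpose (p::nat) (Suc p) i \<noteq> i \<Longrightarrow> i = p \<or> i = Suc p"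
  unfolding Transposition.transpose_def by (cases "i = p"; cases "i = Suc p") simp_all
lemma tr_p: "Transposition.transpose (p::nat) (Suc p) p = Suc p"
  by (simp add: Transposition.transpose_def)
lemma tr_sp: "Transposition.transpose (p::nat) (Suc p) (Suc p) = p"
  by (simp add: Transposition.transpose_def)
lemma tr_o: "i \<noteq> p \<Longrightarrow> i \<noteq> Suc p \<Longrightarrow> Transposition.transpose (p::nat) (Suc p) i = i"
  by (simp add: Transposition.transpose_def)
lemma tr_tr: "Transposition.transpose (p::nat) (Suc p) (Transposition.transpose p (Suc p) i) = i"
  unfolding Transposition.transpose_def by (cases "i = p"; cases "i = Suc p") simp_all


lemma d_val_alt: "d_val \<omega> xs =
     (\<Sum>i<length xs. (-1) ^ i * (xs ! i) (\<omega> (del_nth i xs) 1)) +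
     (\<Sum>j<length xs. \<Sum>i<j. (-1) ^ (i + j) * \<omega> (comm (xs ! i) (xs ! j) # del_nth i (del_nth j xs)) 1)"
  by (simp add: d_val_def comm_def)

context
  fixes \<iota> :: "'k::field \<Rightarrow> 'a::comm_ring_1" and n :: nat and \<omega> :: "('a \<Rightarrow> 'a) list \<Rightarrow> 'a \<Rightarrow> 'a"
  assumes n1: "n \<ge> 1" and om: "Omega \<iota> n \<omega>"
begin

lemma om_Lk: "Lk \<iota> n \<omega>" using om by (simp add: Omega_def)

lemma om_val: "length us = n \<Longrightarrow> set us \<subseteq> Diff1 \<iota> \<Longrightarrow> \<omega> us = mult_op (\<omega> us 1)"
proof -
  assume "length us = n" "set us \<subseteq> Diff1 \<iota>"
  then obtain a where "\<omega> us = mult_op a" using om by (auto simp: Omega_def)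
  then show ?thesis by (simp add: mult_op_def)
qed

lemma om_val': "length us = n \<Longrightarrow> set us \<subseteq> Diff1 \<iota> \<Longrightarrow> \<omega> us b = \<omega> us 1 * b"
  using om_val by (metis mult_op_def)

lemma om_vanish: "length us = n \<Longrightarrow> set us \<subseteq> Diff1 \<iota> \<Longrightarrow> mult_op a \<in> set us \<Longrightarrow> \<omega> us = (\<lambda>b. 0)"
proof -
  assume a: "length us = n" "set us \<subseteq> Diff1 \<iota>" "mult_op a \<in> set us"
  then obtain i where "i < n" "us ! i = mult_op a" by (metis in_set_conv_nth)
  then have "\<exists>i<n. us ! i \<in> range mult_op" by blast
  then show ?thesis using om a unfolding Omega_def by blast
qed

lemma om_add: "length us = n \<Longrightarrow> set us \<subseteq> Diff1 \<iota> \<Longrightarrow> i < n \<Longrightarrow> u \<in> Diff1 \<iota> \<Longrightarrow> v \<in> Diff1 \<iota> \<Longrightarrow>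
   \<omega> (us[i := op_add u v]) = op_add (\<omega> (us[i := u])) (\<omega> (us[i := v]))"
  using om_Lk by (simp add: Lk_def)

lemma om_add': "length us = n \<Longrightarrow> set us \<subseteq> Diff1 \<iota> \<Longrightarrow> i < n \<Longrightarrow> u \<in> Diff1 \<iota> \<Longrightarrow> v \<in> Diff1 \<iota> \<Longrightarrow>
   \<omega> (us[i := op_add u v]) b = \<omega> (us[i := u]) b + \<omega> (us[i := v]) b"
  using om_add by (simp add: op_add_def)

lemma om_scale': "length us = n \<Longrightarrow> set us \<subseteq> Diff1 \<iota> \<Longrightarrow> i < n \<Longrightarrow> u \<in> Diff1 \<iota> \<Longrightarrow>
   \<omega> (us[i := op_scale \<iota> c u]) b = \<iota> c * \<omega> (us[i := u]) b"
  using om_Lk by (simp add: Lk_def op_scale_def)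

lemma om_alt: "length us = n \<Longrightarrow> set us \<subseteq> Diff1 \<iota> \<Longrightarrow> i < j \<Longrightarrow> j < n \<Longrightarrow> us ! i = us ! j \<Longrightarrow>
   \<omega> us = (\<lambda>b. 0)"
  using om_Lk unfolding Lk_def by blast

lemma om_swap: "length us = n \<Longrightarrow> set us \<subseteq> Diff1 \<iota> \<Longrightarrow> i < n \<Longrightarrow> j < n \<Longrightarrow> i \<noteq> j \<Longrightarrow>
   \<omega> (us[i := us ! j, j := us ! i]) b = - \<omega> us b"
proof -
  assume a: "length us = n" "set us \<subseteq> Diff1 \<iota>" "i < n" "j < n" "i \<noteq> j"
  show ?thesis
  proof (rule alt_swap[of "Diff1 \<iota>" n \<omega>])
    show "\<And>vs. length vs = n \<Longrightarrow> set vs \<subseteq> Diff1 \<iota> \<Longrightarrow> vs ! i = vs ! j \<Longrightarrow> \<omega> vs = (\<lambda>b. 0)"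
      using a om_alt by (metis linorder_neqE_nat)
  qed (use a om_add op_add_Diff1 in auto)
qed

lemma om_lin0: "length us = n \<Longrightarrow> set us \<subseteq> Der1 \<iota> \<Longrightarrow> \<omega> (us[0 := mult_op a \<circ> us ! 0]) b = a * \<omega> us b"
  using om n1 by (auto simp: Omega_def mult_op_def dest: fun_cong)


lemma om_add0: "length R = n - 1 \<Longrightarrow> set R \<subseteq> Diff1 \<iota> \<Longrightarrow> A \<in> Diff1 \<iota> \<Longrightarrow> B \<in> Diff1 \<iota> \<Longrightarrow>
   \<omega> (op_add A B # R) b = \<omega> (A # R) b + \<omega> (B # R) b"
  using om_add'[of "A # R" 0 A B b] n1 by simp

lemma om_scale0: "length R = n - 1 \<Longrightarrow> set R \<subseteq> Diff1 \<iota> \<Longrightarrow> A \<in> Diff1 \<iota> \<Longrightarrow>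
   \<omega> (op_scale \<iota> c A # R) b = \<iota> c * \<omega> (A # R) b"
  using om_scale'[of "A # R" 0 A c b] n1 by simp

lemma om_mult: "length L = n \<Longrightarrow> set L \<subseteq> Diff1 \<iota> \<Longrightarrow> \<exists>c. \<forall>b. \<omega> L b = c * b"
  using om_val by (metis mult_op_def)

lemma T1_add:
  assumes us: "length us = Suc n" "set us \<subseteq> Diff1 \<iota>" and p: "p < Suc n" and i: "i < Suc n"
    and uv: "u \<in> Diff1 \<iota>" "v \<in> Diff1 \<iota>"
  shows "T1 \<omega> (us[p := op_add u v]) i b = T1 \<omega> (us[p := u]) i b + T1 \<omega> (us[p := v]) i b"
proof (cases "i = p")
  case True
  have L: "length (del_nth p us) = n" "set (del_nth p us) \<subseteq> Diff1 \<iota>"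
    using us p del_nth_set[of p us] by auto
  obtain c where c: "\<And>b. \<omega> (del_nth p us) b = c * b" using om_mult[OF L] by blast
  have d: "del_nth p (us[p := x]) = del_nth p us" for x using p us by (simp add: del_nth_update)
  have n: "us[p := x] ! p = x" for x using p us by simp
  show ?thesis unfolding T1_def True d n c op_add_def diff1_add[OF uv(1)] diff1_add[OF uv(2)]
    by (simp add: algebra_simps)
next
  case False
  obtain q where q: "q < n" "\<And>x. del_nth i (us[p := x]) = (del_nth i us)[q := x]"
    using del1_upd[of i us p] us i p False by auto
  have L: "length (del_nth i us) = n" "set (del_nth i us) \<subseteq> Diff1 \<iota>"
    using us i del_nth_set[of i us] by auto
  have w: "us ! i \<in> Diff1 \<iota>" using us i by auto
  have n: "us[p := x] ! i = us ! i" for x using False by simp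
  show ?thesis unfolding T1_def q(2) n om_add'[OF L q(1) uv] diff1_add[OF w]
    by (simp add: algebra_simps)
qed

lemma T1_scale:
  assumes us: "length us = Suc n" "set us \<subseteq> Diff1 \<iota>" and p: "p < Suc n" and i: "i < Suc n"
    and u: "u \<in> Diff1 \<iota>"
  shows "T1 \<omega> (us[p := op_scale \<iota> c u]) i b = \<iota> c * T1 \<omega> (us[p := u]) i b"
proof (cases "i = p")
  case True
  have L: "length (del_nth p us) = n" "set (del_nth p us) \<subseteq> Diff1 \<iota>"
    using us p del_nth_set[of p us] by auto
  obtain d where d: "\<forall>b. \<omega> (del_nth p us) b = d * b" using om_mult[OF L] by blast
  show ?thesis using True us p u
    by (simp add: T1_def del_nth_update d op_scale_def algebra_simps)
next
  case False
  obtain q where q: "q < n" "\<forall>x. del_nth i (us[p := x]) = (del_nth i us)[q := x]"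
    using del1_upd[of i us p] us i p False by auto
  have L: "length (del_nth i us) = n" "set (del_nth i us) \<subseteq> Diff1 \<iota>"
    using us i del_nth_set[of i us] by auto
  have w: "us ! i \<in> Diff1 \<iota>" using us i by auto
  show ?thesis using False q us p u
    by (simp add: T1_def om_scale'[OF L q(1) u] diff1_scale[OF w] right_diff_distrib)
qed

lemma T2_add:
  assumes us: "length us = Suc n" "set us \<subseteq> Diff1 \<iota>" and p: "p < Suc n" and ij: "i < j" "j < Suc n"
    and uv: "u \<in> Diff1 \<iota>" "v \<in> Diff1 \<iota>"
  shows "T2 \<omega> (us[p := op_add u v]) i j b = T2 \<omega> (us[p := u]) i j b + T2 \<omega> (us[p := v]) i j b"
proof -
  have R: "length (del_nth i (del_nth j us)) = n - 1" "set (del_nth i (del_nth j us)) \<subseteq> Diff1 \<iota>"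
    using us ij del2_set[of i j us] by auto
  have wi: "us ! i \<in> Diff1 \<iota>" and wj: "us ! j \<in> Diff1 \<iota>" using us ij by auto
  consider "p = i" | "p = j" | "p \<noteq> i" "p \<noteq> j" by blast
  then show ?thesis
  proof cases
    case 1
    have d: "del_nth i (del_nth j (us[p := x])) = del_nth i (del_nth j us)" for x
      by (rule del2_upd_ij) (use ij us 1 in auto)
    have e1: "us[p := x] ! i = x" "us[p := x] ! j = us ! j" for x using 1 ij us by auto
    show ?thesis unfolding T2_def d e1 comm_add1[OF wj]
      by (rule om_add0[OF R comm_Diff1[OF uv(1) wj] comm_Diff1[OF uv(2) wj]])
  next
    case 2
    have d: "del_nth i (del_nth j (us[p := x])) = del_nth i (del_nth j us)" for x
      by (rule del2_upd_ij) (use ij us 2 in auto)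
    have e1: "us[p := x] ! j = x" "us[p := x] ! i = us ! i" for x using 2 ij us by auto
    show ?thesis unfolding T2_def d e1 comm_add2[OF wi]
      by (rule om_add0[OF R comm_Diff1[OF wi uv(1)] comm_Diff1[OF wi uv(2)]])
  next
    case 3
    obtain q where q: "q < n - 1" "\<And>x. del_nth i (del_nth j (us[p := x])) = (del_nth i (del_nth j us))[q := x]"
      using del2_upd[of i j us p] us ij p 3 by auto
    define c where "c = comm (us ! i) (us ! j)"
    have cD: "c \<in> Diff1 \<iota>" using comm_Diff1 wi wj c_def by blast
    have L: "length (c # del_nth i (del_nth j us)) = n" "set (c # del_nth i (del_nth j us)) \<subseteq> Diff1 \<iota>"
      using R cD n1 by auto
    have qq: "Suc q < n" using q by simp
    have e: "\<And>x. c # (del_nth i (del_nth j us))[q := x] = (c # del_nth i (del_nth j us))[Suc q := x]" by simp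
    have e1: "us[p := x] ! i = us ! i" "us[p := x] ! j = us ! j" for x using 3 by auto
    show ?thesis unfolding T2_def e1 c_def[symmetric] q(2) e by (rule om_add'[OF L qq uv])
  qed
qed

lemma T2_scale:
  assumes us: "length us = Suc n" "set us \<subseteq> Diff1 \<iota>" and p: "p < Suc n" and ij: "i < j" "j < Suc n"
    and u: "u \<in> Diff1 \<iota>"
  shows "T2 \<omega> (us[p := op_scale \<iota> c' u]) i j b = \<iota> c' * T2 \<omega> (us[p := u]) i j b"
proof -
  have R: "length (del_nth i (del_nth j us)) = n - 1" "set (del_nth i (del_nth j us)) \<subseteq> Diff1 \<iota>"
    using us ij del2_set[of i j us] by auto
  have wi: "us ! i \<in> Diff1 \<iota>" and wj: "us ! j \<in> Diff1 \<iota>" using us ij by auto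
  consider "p = i" | "p = j" | "p \<noteq> i" "p \<noteq> j" by blast
  then show ?thesis
  proof cases
    case 1
    have d: "del_nth i (del_nth j (us[p := x])) = del_nth i (del_nth j us)" for x
      by (rule del2_upd_ij) (use ij us 1 in auto)
    have e1: "us[p := x] ! i = x" "us[p := x] ! j = us ! j" for x using 1 ij us by auto
    show ?thesis unfolding T2_def d e1 comm_scale1[OF wj]
      by (rule om_scale0[OF R comm_Diff1[OF u wj]])
  next
    case 2
    have d: "del_nth i (del_nth j (us[p := x])) = del_nth i (del_nth j us)" for x
      by (rule del2_upd_ij) (use ij us 2 in auto)
    have e1: "us[p := x] ! j = x" "us[p := x] ! i = us ! i" for x using 2 ij us by auto
    show ?thesis unfolding T2_def d e1 comm_scale2[OF wi]
      by (rule om_scale0[OF R comm_Diff1[OF wi u]])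
  next
    case 3
    obtain q where q: "q < n - 1" "\<And>x. del_nth i (del_nth j (us[p := x])) = (del_nth i (del_nth j us))[q := x]"
      using del2_upd[of i j us p] us ij p 3 by auto
    define c where "c = comm (us ! i) (us ! j)"
    have cD: "c \<in> Diff1 \<iota>" using comm_Diff1 wi wj c_def by blast
    have L: "length (c # del_nth i (del_nth j us)) = n" "set (c # del_nth i (del_nth j us)) \<subseteq> Diff1 \<iota>"
      using R cD n1 by auto
    have qq: "Suc q < n" using q by simp
    have e: "\<And>x. c # (del_nth i (del_nth j us))[q := x] = (c # del_nth i (del_nth j us))[Suc q := x]" by simp
    have e1: "us[p := x] ! i = us ! i" "us[p := x] ! j = us ! j" for x using 3 by auto
    show ?thesis unfolding T2_def e1 c_def[symmetric] q(2) e by (rule om_scale'[OF L qq u])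
  qed
qed

lemma G_add:
  assumes us: "length us = Suc n" "set us \<subseteq> Diff1 \<iota>" and p: "p < Suc n"
    and uv: "u \<in> Diff1 \<iota>" "v \<in> Diff1 \<iota>"
  shows "G \<omega> (us[p := op_add u v]) = op_add (G \<omega> (us[p := u])) (G \<omega> (us[p := v]))"
proof (rule ext)
  fix b
  have 1: "(\<Sum>i<Suc n. (-1) ^ i * T1 \<omega> (us[p := op_add u v]) i b) =
      (\<Sum>i<Suc n. (-1) ^ i * T1 \<omega> (us[p := u]) i b) + (\<Sum>i<Suc n. (-1) ^ i * T1 \<omega> (us[p := v]) i b)"
    unfolding sum.distrib[symmetric] by (rule sum.cong) (auto simp: T1_add[OF us p _ uv] distrib_left)
  have 2: "(\<Sum>j<Suc n. \<Sum>i<j. (-1) ^ (i + j) * T2 \<omega> (us[p := op_add u v]) i j b) =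
      (\<Sum>j<Suc n. \<Sum>i<j. (-1) ^ (i + j) * T2 \<omega> (us[p := u]) i j b) +
      (\<Sum>j<Suc n. \<Sum>i<j. (-1) ^ (i + j) * T2 \<omega> (us[p := v]) i j b)"
    unfolding sum.distrib[symmetric]
    by (rule sum.cong, simp, rule sum.cong) (auto simp: T2_add[OF us p _ _ uv] distrib_left)
  have "G \<omega> (us[p := op_add u v]) b = G \<omega> (us[p := u]) b + G \<omega> (us[p := v]) b"
    unfolding G_T length_list_update us(1) 1 2 by (simp add: algebra_simps)
  then show "G \<omega> (us[p := op_add u v]) b = op_add (G \<omega> (us[p := u])) (G \<omega> (us[p := v])) b"
    by (simp only: op_add_def)
qed

lemma G_scale:
  assumes us: "length us = Suc n" "set us \<subseteq> Diff1 \<iota>" and p: "p < Suc n"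
    and u: "u \<in> Diff1 \<iota>"
  shows "G \<omega> (us[p := op_scale \<iota> c u]) = op_scale \<iota> c (G \<omega> (us[p := u]))"
proof (rule ext)
  fix b
  have 1: "(\<Sum>i<Suc n. (-1) ^ i * T1 \<omega> (us[p := op_scale \<iota> c u]) i b) =
      \<iota> c * (\<Sum>i<Suc n. (-1) ^ i * T1 \<omega> (us[p := u]) i b)"
    unfolding sum_distrib_left by (rule sum.cong) (auto simp: T1_scale[OF us p _ u] mult.left_commute)
  have 2: "(\<Sum>j<Suc n. \<Sum>i<j. (-1) ^ (i + j) * T2 \<omega> (us[p := op_scale \<iota> c u]) i j b) =
      \<iota> c * (\<Sum>j<Suc n. \<Sum>i<j. (-1) ^ (i + j) * T2 \<omega> (us[p := u]) i j b)"
    unfolding sum_distrib_left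
    by (rule sum.cong, simp, rule sum.cong) (auto simp: T2_scale[OF us p _ _ u] mult.left_commute)
  have "G \<omega> (us[p := op_scale \<iota> c u]) b = \<iota> c * G \<omega> (us[p := u]) b"
    unfolding G_T length_list_update us(1) 1 2 by (simp add: right_diff_distrib)
  then show "G \<omega> (us[p := op_scale \<iota> c u]) b = op_scale \<iota> c (G \<omega> (us[p := u])) b"
    by (simp only: op_scale_def)
qed


lemma T1_mult:
  assumes us: "length us = Suc n" "set us \<subseteq> Diff1 \<iota>" and i: "i < Suc n"
  shows "T1 \<omega> us i b = T1 \<omega> us i 1 * b"
proof -
  have L: "length (del_nth i us) = n" "set (del_nth i us) \<subseteq> Diff1 \<iota>"
    using us i del_nth_set[of i us] by auto
  obtain c where c: "\<And>b. \<omega> (del_nth i us) b = c * b" using om_mult[OF L] by blast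
  have w: "us ! i \<in> Diff1 \<iota>" using us i by auto
  obtain q where q: "\<And>b. (us ! i) (c * b) = c * (us ! i) b + q * b" using diff1_commD[OF w] by blast
  show ?thesis unfolding T1_def c q by (simp add: algebra_simps)
qed

lemma T2_mult:
  assumes us: "length us = Suc n" "set us \<subseteq> Diff1 \<iota>" and ij: "i < j" "j < Suc n"
  shows "T2 \<omega> us i j b = T2 \<omega> us i j 1 * b"
proof -
  have R: "length (del_nth i (del_nth j us)) = n - 1" "set (del_nth i (del_nth j us)) \<subseteq> Diff1 \<iota>"
    using us ij del2_set[of i j us] by auto
  have wi: "us ! i \<in> Diff1 \<iota>" and wj: "us ! j \<in> Diff1 \<iota>" using us ij by auto
  have cD: "comm (us ! i) (us ! j) \<in> Diff1 \<iota>" using comm_Diff1 wi wj by blast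
  have L: "length (comm (us ! i) (us ! j) # del_nth i (del_nth j us)) = n"
     "set (comm (us ! i) (us ! j) # del_nth i (del_nth j us)) \<subseteq> Diff1 \<iota>" using R cD n1 by auto
  obtain c where c: "\<And>b. \<omega> (comm (us ! i) (us ! j) # del_nth i (del_nth j us)) b = c * b"
    using om_mult[OF L] by blast
  show ?thesis unfolding T2_def c by simp
qed

lemma G_val:
  assumes us: "length us = Suc n" "set us \<subseteq> Diff1 \<iota>"
  shows "G \<omega> us = mult_op (G \<omega> us 1)"
proof (rule ext)
  fix b
  have 1: "(\<Sum>i<Suc n. (-1) ^ i * T1 \<omega> us i b) = (\<Sum>i<Suc n. (-1) ^ i * T1 \<omega> us i 1) * b"
    unfolding sum_distrib_right by (rule sum.cong) (auto simp: T1_mult[OF us, of _ b])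
  have 2: "(\<Sum>j<Suc n. \<Sum>i<j. (-1) ^ (i + j) * T2 \<omega> us i j b) =
      (\<Sum>j<Suc n. \<Sum>i<j. (-1) ^ (i + j) * T2 \<omega> us i j 1) * b"
    unfolding sum_distrib_right
    by (rule sum.cong, simp, rule sum.cong) (auto simp: T2_mult[OF us, of _ _ b])
  show "G \<omega> us b = mult_op (G \<omega> us 1) b"
    unfolding mult_op_def G_T us(1) 1 2 by (simp add: left_diff_distrib)
qed

lemma G_vanish:
  assumes us: "length us = Suc n" "set us \<subseteq> Diff1 \<iota>" and p: "p < Suc n" and a: "us ! p = mult_op a"
  shows "G \<omega> us b = 0"
proof -
  have t1: "T1 \<omega> us i b = 0" if i: "i < Suc n" for i
  proof (cases "i = p")
    case True
    have L: "length (del_nth i us) = n" "set (del_nth i us) \<subseteq> Diff1 \<iota>"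
      using us i del_nth_set[of i us] by auto
    obtain c where c: "\<And>b. \<omega> (del_nth i us) b = c * b" using om_mult[OF L] by blast
    have a': "us ! i = mult_op a" using True a by simp
    show ?thesis unfolding T1_def c a' by (simp add: mult_op_def algebra_simps)
  next
    case False
    have L: "length (del_nth i us) = n" "set (del_nth i us) \<subseteq> Diff1 \<iota>"
      using us i del_nth_set[of i us] by auto
    have "mult_op a \<in> set (del_nth i us)" using del_nth_mem[of i us p] us i p False a by simp
    then have z: "\<omega> (del_nth i us) = (\<lambda>b. 0)" using om_vanish[OF L] by blast
    have w: "us ! i \<in> Diff1 \<iota>" using us i by auto
    show ?thesis unfolding T1_def z by (simp add: diff1_zero[OF w])
  qed
  have t2: "T2 \<omega> us i j b = 0" if ij: "i < j" "j < Suc n" for i j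
  proof -
    have R: "length (del_nth i (del_nth j us)) = n - 1" "set (del_nth i (del_nth j us)) \<subseteq> Diff1 \<iota>"
      using us ij del2_set[of i j us] by auto
    have wi: "us ! i \<in> Diff1 \<iota>" and wj: "us ! j \<in> Diff1 \<iota>" using us ij by auto
    have cD: "comm (us ! i) (us ! j) \<in> Diff1 \<iota>" using comm_Diff1 wi wj by blast
    have L: "length (comm (us ! i) (us ! j) # del_nth i (del_nth j us)) = n"
       "set (comm (us ! i) (us ! j) # del_nth i (del_nth j us)) \<subseteq> Diff1 \<iota>" using R cD n1 by auto
    have "\<exists>e. mult_op e \<in> set (comm (us ! i) (us ! j) # del_nth i (del_nth j us))"
    proof -
      consider "p = i" | "p = j" | "p \<noteq> i" "p \<noteq> j" by blast
      then show ?thesis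
      proof cases
        case 1
        obtain e where "comm (mult_op a) (us ! j) = mult_op e" using comm_mult1[OF wj] by blast
        then show ?thesis using 1 a by (intro exI[of _ e]) simp
      next
        case 2
        obtain e where "comm (us ! i) (mult_op a) = mult_op e" using comm_mult2[OF wi] by blast
        then show ?thesis using 2 a by (intro exI[of _ e]) simp
      next
        case 3
        obtain q where q: "q < n - 1" "\<And>x. del_nth i (del_nth j (us[p := x])) = (del_nth i (del_nth j us))[q := x]"
          using del2_upd[of i j us p] us ij p 3 by auto
        have "del_nth i (del_nth j us) = (del_nth i (del_nth j us))[q := us ! p]"
          using q(2)[of "us ! p"] by simp
        then have "(del_nth i (del_nth j us)) ! q = us ! p"
          using q(1) R(1) by (metis nth_list_update_eq)
        then have "us ! p \<in> set (del_nth i (del_nth j us))" using q(1) R(1) by (metis nth_mem)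
        then show ?thesis using a by auto
      qed
    qed
    then obtain e where "mult_op e \<in> set (comm (us ! i) (us ! j) # del_nth i (del_nth j us))" by blast
    then show ?thesis unfolding T2_def using om_vanish[OF L] by simp
  qed
  show ?thesis unfolding G_T us(1) by (simp add: t1 t2)
qed

lemma G_der:
  assumes us: "length us = Suc n" "set us \<subseteq> Der1 \<iota>"
  shows "G \<omega> us = mult_op (- d_val \<omega> us)"
proof (rule ext)
  fix b
  have usD: "set us \<subseteq> Diff1 \<iota>" using us der1_Diff1 by blast
  have t1: "T1 \<omega> us i b = - ((us ! i) (\<omega> (del_nth i us) 1) * b)" if i: "i < Suc n" for i
  proof -
    have L: "length (del_nth i us) = n" "set (del_nth i us) \<subseteq> Diff1 \<iota>"
      using usD us i del_nth_set[of i us] by auto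
    obtain c where c: "\<And>b. \<omega> (del_nth i us) b = c * b" using om_mult[OF L] by blast
    have w: "us ! i \<in> Der1 \<iota>" using us i by auto
    show ?thesis unfolding T1_def c der1D[OF w] der1_one[OF w] by (simp add: algebra_simps)
  qed
  have 1: "(\<Sum>i<Suc n. (-1) ^ i * T1 \<omega> us i b) = - ((\<Sum>i<Suc n. (-1) ^ i * (us ! i) (\<omega> (del_nth i us) 1)) * b)"
    unfolding sum_distrib_right sum_negf[symmetric] by (rule sum.cong) (auto simp: t1)
  have 2: "(\<Sum>j<Suc n. \<Sum>i<j. (-1) ^ (i + j) * T2 \<omega> us i j b) =
      (\<Sum>j<Suc n. \<Sum>i<j. (-1) ^ (i + j) * T2 \<omega> us i j 1) * b"
    unfolding sum_distrib_right
    by (rule sum.cong, simp, rule sum.cong) (auto simp: T2_mult[OF us(1) usD, of _ _ b])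
  have "G \<omega> us b = (\<Sum>i<Suc n. (-1) ^ i * T1 \<omega> us i b) - (\<Sum>j<Suc n. \<Sum>i<j. (-1) ^ (i + j) * T2 \<omega> us i j b)"
    by (simp only: G_T us(1))
  also have "\<dots> = - ((\<Sum>i<Suc n. (-1) ^ i * (us ! i) (\<omega> (del_nth i us) 1)) * b) -
      (\<Sum>j<Suc n. \<Sum>i<j. (-1) ^ (i + j) * T2 \<omega> us i j 1) * b" by (simp only: 1 2)
  also have "\<dots> = mult_op (- d_val \<omega> us) b"
    by (simp add: mult_op_def d_val_def T2_def comm_def us(1) algebra_simps del: sum.lessThan_Suc)
  finally show "G \<omega> us b = mult_op (- d_val \<omega> us) b" .
qed

lemma om_lin1:
  assumes L: "length L = n" "set L \<subseteq> Der1 \<iota>" and n2: "n \<ge> 2"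
  shows "\<omega> (L[1 := mult_op a \<circ> L ! 1]) b = a * \<omega> L b"
proof -
  have LD: "set L \<subseteq> Diff1 \<iota>" using L der1_Diff1 by blast
  define Y where "Y = mult_op a \<circ> L ! 1"
  have "L ! 1 \<in> Der1 \<iota>" using L n2 nth_mem[of 1 L] by auto
  then have Y: "Y \<in> Der1 \<iota>" unfolding Y_def using der1_mult by blast
  define M where "M = L[1 := Y]"
  have M: "length M = n" "set M \<subseteq> Diff1 \<iota>" using L set_upd_sub[OF LD der1_Diff1[OF Y]] by (auto simp: M_def)
  have "\<omega> (M[0 := M ! 1, 1 := M ! 0]) b = - \<omega> M b" by (rule om_swap) (use M n2 in auto)
  moreover define L' where "L' = L[0 := L ! 1, 1 := L ! 0]"
  moreover have "M[0 := M ! 1, 1 := M ! 0] = L'[0 := mult_op a \<circ> L' ! 0]"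
  proof -
    have e1: "M ! 1 = Y" "M ! 0 = L ! 0" using n2 L by (auto simp: M_def)
    have e2: "L' ! 0 = L ! 1" using n2 L by (simp add: L'_def nth_list_update)
    have "M[0 := M ! 1, 1 := M ! 0] = L[1 := Y, 0 := Y, 1 := L ! 0]" by (simp only: e1) (simp only: M_def)
    also have "\<dots> = L[0 := Y, 1 := Y, 1 := L ! 0]" by (subst list_update_swap[of 1 0]) simp_all
    also have "\<dots> = L[0 := Y, 1 := L ! 0]" by simp
    finally have 1: "M[0 := M ! 1, 1 := M ! 0] = L[0 := Y, 1 := L ! 0]" .
    have "L'[0 := mult_op a \<circ> L' ! 0] = L[0 := L ! 1, 1 := L ! 0, 0 := Y]" unfolding e2 by (simp only: L'_def Y_def)
    also have "\<dots> = L[0 := L ! 1, 0 := Y, 1 := L ! 0]" by (subst list_update_swap[of 0 1]) simp_all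
    also have "\<dots> = L[0 := Y, 1 := L ! 0]" by simp
    finally show ?thesis using 1 by simp
  qed
  moreover have L': "length L' = n" "set L' \<subseteq> Der1 \<iota>" using L n2 by (auto simp: L'_def set_upd_sub)
  moreover have "\<omega> (L'[0 := mult_op a \<circ> L' ! 0]) b = a * \<omega> L' b" by (rule om_lin0[OF L'])
  moreover have "\<omega> L' b = - \<omega> L b" unfolding L'_def by (rule om_swap) (use L LD n2 in auto)
  ultimately show ?thesis by (simp add: M_def Y_def)
qed


context
  fixes us p
  assumes us: "length us = Suc n" "set us \<subseteq> Diff1 \<iota>" and sp: "Suc p < Suc n" and eq: "us ! p = us ! Suc p"
begin

lemma T1_fix: "i < Suc n \<Longrightarrow> i \<noteq> p \<Longrightarrow> i \<noteq> Suc p \<Longrightarrow> T1 \<omega> us i b = 0"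
proof -
  assume i: "i < Suc n" "i \<noteq> p" "i \<noteq> Suc p"
  have L: "length (del_nth i us) = n" "set (del_nth i us) \<subseteq> Diff1 \<iota>"
    using us i del_nth_set[of i us] by auto
  define q where "q = (if i < p then p - 1 else p)"
  have "del_nth i us ! q = del_nth i us ! Suc q \<and> Suc q < length (del_nth i us)"
    using del_nth_adj_keep[of p us i] us sp eq i unfolding q_def Let_def by simp
  then have z: "\<omega> (del_nth i us) = (\<lambda>b. 0)" using om_alt[OF L, of q "Suc q"] L by simp
  have w: "us ! i \<in> Diff1 \<iota>" using us i by auto
  show ?thesis unfolding T1_def z by (simp add: diff1_zero[OF w])
qed

lemma T1_pp: "T1 \<omega> us (Suc p) b = T1 \<omega> us p b"
  unfolding T1_def using del_nth_adj_eq[of p us] us sp eq by simp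

lemma S1_zero: "(\<Sum>i<Suc n. (-1) ^ i * T1 \<omega> us i b) = 0"
proof (rule sum_inv_zero[where h = "Transposition.transpose p (Suc p)"])
  fix i assume i: "i \<in> {..<Suc n}"
  show "Transposition.transpose p (Suc p) i \<in> {..<Suc n}" using i sp
    by (cases "i = p"; cases "i = Suc p") (simp_all add: tr_p tr_sp tr_o)
  show "Transposition.transpose p (Suc p) (Transposition.transpose p (Suc p) i) = i" by (rule tr_tr)
  show "(-1) ^ i * T1 \<omega> us i b = 0" if fx: "Transposition.transpose p (Suc p) i = i"
  proof -
    have "i \<noteq> p" "i \<noteq> Suc p" using tr_fix[OF fx] by auto
    then show ?thesis using T1_fix i by simp
  qed
  show "(-1) ^ Transposition.transpose p (Suc p) i * T1 \<omega> us (Transposition.transpose p (Suc p) i) b +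
        (-1) ^ i * T1 \<omega> us i b = 0" if "Transposition.transpose p (Suc p) i \<noteq> i"
  proof -
    have "i = p \<or> i = Suc p" using tr_nfix[OF that] .
    then show ?thesis using T1_pp by (auto simp: tr_p tr_sp)
  qed
qed simp

lemma T2_fix: "i < j \<Longrightarrow> j < Suc n \<Longrightarrow> i \<noteq> p \<Longrightarrow> i \<noteq> Suc p \<Longrightarrow> j \<noteq> p \<Longrightarrow> j \<noteq> Suc p \<Longrightarrow>
    T2 \<omega> us i j b = 0"
proof -
  assume ij: "i < j" "j < Suc n" "i \<noteq> p" "i \<noteq> Suc p" "j \<noteq> p" "j \<noteq> Suc p"
  define q1 where "q1 = (if j < p then p - 1 else p)"
  have a1: "del_nth j us ! q1 = del_nth j us ! Suc q1 \<and> Suc q1 < length (del_nth j us)"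
    using del_nth_adj_keep[of p us j] us sp eq ij unfolding q1_def Let_def by simp
  have "i \<noteq> q1" "i \<noteq> Suc q1" using ij by (auto simp: q1_def)
  define R where "R = del_nth i (del_nth j us)"
  define q2 where "q2 = (if i < q1 then q1 - 1 else q1)"
  have a2: "R ! q2 = R ! Suc q2 \<and> Suc q2 < length R"
    using del_nth_adj_keep[of q1 "del_nth j us" i] a1 \<open>i \<noteq> q1\<close> \<open>i \<noteq> Suc q1\<close> ij us
    unfolding q2_def Let_def R_def by simp
  have R: "length R = n - 1" "set R \<subseteq> Diff1 \<iota>"
    using us ij del2_set[of i j us] by (auto simp: R_def)
  have wi: "us ! i \<in> Diff1 \<iota>" and wj: "us ! j \<in> Diff1 \<iota>" using us ij by auto
  have cD: "comm (us ! i) (us ! j) \<in> Diff1 \<iota>" using comm_Diff1 wi wj by blast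
  have L: "length (comm (us ! i) (us ! j) # R) = n" "set (comm (us ! i) (us ! j) # R) \<subseteq> Diff1 \<iota>"
    using R cD n1 by auto
  have "\<omega> (comm (us ! i) (us ! j) # R) = (\<lambda>b. 0)"
    by (rule om_alt[OF L, of "Suc q2" "Suc (Suc q2)"]) (use a2 L in auto)
  then show ?thesis unfolding T2_def R_def[symmetric] by simp
qed

lemma T2_pp: "T2 \<omega> us p (Suc p) b = 0"
proof -
  have R: "length (del_nth p (del_nth (Suc p) us)) = n - 1" "set (del_nth p (del_nth (Suc p) us)) \<subseteq> Diff1 \<iota>"
    using us sp del2_set[of p "Suc p" us] by auto
  have c: "comm (us ! p) (us ! Suc p) = mult_op 0" using eq by (simp add: comm_def mult_op_def fun_eq_iff)
  have L: "length (mult_op 0 # del_nth p (del_nth (Suc p) us)) = n"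
    "set (mult_op 0 # del_nth p (del_nth (Suc p) us)) \<subseteq> Diff1 \<iota>" using R n1 mult_op_Diff1 by auto
  show ?thesis unfolding T2_def c using om_vanish[OF L, of 0] by simp
qed

lemma T2_a: "i < p \<Longrightarrow> T2 \<omega> us i (Suc p) b = T2 \<omega> us i p b"
  unfolding T2_def using del_nth_adj_eq[of p us] us sp eq by simp

lemma T2_c: "Suc p < j \<Longrightarrow> j < Suc n \<Longrightarrow> T2 \<omega> us (Suc p) j b = T2 \<omega> us p j b"
proof -
  assume j: "Suc p < j" "j < Suc n"
  have "del_nth j us ! p = del_nth j us ! Suc p" using j us eq by (simp add: del_nth_nth)
  then have "del_nth p (del_nth j us) = del_nth (Suc p) (del_nth j us)"
    using del_nth_adj_eq[of p "del_nth j us"] j us by simp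
  then show ?thesis unfolding T2_def using eq by simp
qed

lemma S2_zero: "(\<Sum>j<Suc n. \<Sum>i<j. (-1) ^ (i + j) * T2 \<omega> us i j b) = 0"
proof -
  define t where "t = Transposition.transpose p (Suc p)"
  define h where "h = (\<lambda>(j, i). if (j, i) = (Suc p, p) then (j, i) else (t j, t i))"
  define f where "f = (\<lambda>(j, i). (-1) ^ (i + j) * T2 \<omega> us i j b)"
  have "(\<Sum>j<Suc n. \<Sum>i<j. (-1) ^ (i + j) * T2 \<omega> us i j b) = (\<Sum>x\<in>(SIGMA j:{..<Suc n}. {..<j}). f x)"
    unfolding f_def by (subst sum.Sigma) auto
  also have "\<dots> = 0"
  proof (rule sum_inv_zero[where h = h])
    fix x assume x: "x \<in> (SIGMA j:{..<Suc n}. {..<j})"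
    obtain j i where ji: "x = (j, i)" "i < j" "j < Suc n" using x by auto
    show "h x \<in> (SIGMA j:{..<Suc n}. {..<j})"
      using ji sp unfolding h_def t_def
      by (cases "i = p"; cases "i = Suc p"; cases "j = p"; cases "j = Suc p") (simp_all add: tr_p tr_sp tr_o)
    show "h (h x) = x"
    proof (cases "(j, i) = (Suc p, p)")
      case True then show ?thesis using ji by (simp add: h_def)
    next
      case False
      have "(t j, t i) \<noteq> (Suc p, p)"
      proof
        assume "(t j, t i) = (Suc p, p)"
        then have "t (t j) = t (Suc p)" "t (t i) = t p" by auto
        then have "j = p" "i = Suc p" by (simp_all add: t_def tr_tr tr_p tr_sp)
        then show False using ji by simp
      qed
      then have "h (t j, t i) = (t (t j), t (t i))" by (auto simp: h_def)
      moreover have "h x = (t j, t i)" using False ji by (auto simp: h_def)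
      ultimately show ?thesis using ji by (simp add: t_def tr_tr)
    qed
    show "h x = x \<Longrightarrow> f x = 0"
    proof -
      assume hx: "h x = x"
      show "f x = 0"
      proof (cases "(j, i) = (Suc p, p)")
        case True then show ?thesis using ji T2_pp by (simp add: f_def)
      next
        case False
        then have "t j = j" "t i = i" using hx ji by (auto simp: h_def)
        then have "i \<noteq> p" "i \<noteq> Suc p" "j \<noteq> p" "j \<noteq> Suc p"
          using tr_fix unfolding t_def by blast+
        then show ?thesis using ji T2_fix by (simp add: f_def)
      qed
    qed
    show "h x \<noteq> x \<Longrightarrow> f (h x) + f x = 0"
    proof -
      assume hx: "h x \<noteq> x"
      then have nf: "(j, i) \<noteq> (Suc p, p)" using ji by (auto simp: h_def)
      then have hji: "h x = (t j, t i)" using ji by (auto simp: h_def)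
      consider "j = Suc p" "i < p" | "j = p" | "i = p" "Suc p < j" | "i = Suc p"
        | "i \<noteq> p" "i \<noteq> Suc p" "j \<noteq> p" "j \<noteq> Suc p"
        using ji nf by (cases "j = Suc p"; cases "j = p"; cases "i = p"; cases "i = Suc p") auto
      then show ?thesis
      proof cases
        case 1 then show ?thesis using hji ji T2_a[of i b]
          by (simp add: f_def t_def tr_p tr_sp tr_o)
      next
        case 2 then show ?thesis using hji ji T2_a[of i b]
          by (simp add: f_def t_def tr_p tr_sp tr_o)
      next
        case 3 then show ?thesis using hji ji T2_c[of j b]
          by (simp add: f_def t_def tr_p tr_sp tr_o)
      next
        case 4 then show ?thesis using hji ji T2_c[of j b]
          by (simp add: f_def t_def tr_p tr_sp tr_o)
      next
        case 5 then have "h x = x" using hji ji by (simp add: t_def tr_o)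
        then show ?thesis using hx by simp
      qed
    qed
  qed simp
  finally show ?thesis .
qed

lemma G_adj: "G \<omega> us b = 0"
  unfolding G_T us(1) S1_zero S2_zero by simp

end


context
  fixes us :: "('a \<Rightarrow> 'a) list" and a :: 'a
  assumes us: "length us = Suc n" "set us \<subseteq> Der1 \<iota>"
begin

definition Yv where "Yv = mult_op a \<circ> us ! 0"
definition cv where "cv i = \<omega> (del_nth i us) 1"

lemma usD: "set us \<subseteq> Diff1 \<iota>" using us der1_Diff1 by blast
lemma X_der: "i < Suc n \<Longrightarrow> us ! i \<in> Der1 \<iota>" using us by auto
lemma Y_der: "Yv \<in> Der1 \<iota>" unfolding Yv_def using X_der[of 0] der1_mult by blast

lemma termA: "i < Suc n \<Longrightarrow>
   (us[0 := Yv] ! i) (\<omega> (del_nth i (us[0 := Yv])) 1) =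
     a * (us ! i) (cv i) + (if i = 0 then 0 else (us ! i) a * cv i)"
proof -
  assume i: "i < Suc n"
  show ?thesis
  proof (cases "i = 0")
    case True
    have "del_nth 0 (us[0 := Yv]) = del_nth 0 us" using us by (simp add: del_nth_update)
    then show ?thesis using True us by (simp add: Yv_def cv_def mult_op_def)
  next
    case False
    have L: "length (del_nth i us) = n" "set (del_nth i us) \<subseteq> Der1 \<iota>"
      using us i del_nth_set[of i us] by auto
    have d: "del_nth i (us[0 := Yv]) = (del_nth i us)[0 := mult_op a \<circ> del_nth i us ! 0]"
      using us i False by (simp add: del_nth_update del_nth_nth Yv_def)
    have w: "us ! i \<in> Der1 \<iota>" using X_der i .
    have "\<omega> (del_nth i (us[0 := Yv])) 1 = a * cv i" unfolding d cv_def by (rule om_lin0[OF L])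
    then show ?thesis using False by (simp add: der1D[OF w] algebra_simps)
  qed
qed

lemma termB: "i < j \<Longrightarrow> j < Suc n \<Longrightarrow>
   \<omega> (comm (us[0 := Yv] ! i) (us[0 := Yv] ! j) # del_nth i (del_nth j (us[0 := Yv]))) 1 =
     a * \<omega> (comm (us ! i) (us ! j) # del_nth i (del_nth j us)) 1 +
     (if i = 0 then - ((us ! j) a * cv j) else 0)"
proof -
  assume ij: "i < j" "j < Suc n"
  have R: "length (del_nth i (del_nth j us)) = n - 1" "set (del_nth i (del_nth j us)) \<subseteq> Der1 \<iota>"
    using us ij del2_set[of i j us] by auto
  have wi: "us ! i \<in> Der1 \<iota>" and wj: "us ! j \<in> Der1 \<iota>" using X_der ij by auto
  have cD: "comm (us ! i) (us ! j) \<in> Der1 \<iota>" using der1_comm wi wj by blast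
  have L: "length (comm (us ! i) (us ! j) # del_nth i (del_nth j us)) = n"
     "set (comm (us ! i) (us ! j) # del_nth i (del_nth j us)) \<subseteq> Der1 \<iota>" using R cD n1 by auto
  show ?thesis
  proof (cases "i = 0")
    case True
    have e1: "us[0 := Yv] ! i = Yv" "us[0 := Yv] ! j = us ! j" using True ij us by auto
    have d: "del_nth i (del_nth j (us[0 := Yv])) = del_nth i (del_nth j us)"
      by (rule del2_upd_ij) (use ij us True in auto)
    have x0: "us ! 0 \<in> Der1 \<iota>" using X_der by simp
    have c: "comm Yv (us ! j) = op_add (mult_op a \<circ> comm (us ! 0) (us ! j)) (mult_op (- (us ! j) a) \<circ> us ! 0)"
      by (auto simp: fun_eq_iff comm_def op_add_def Yv_def mult_op_def der1D[OF wj] algebra_simps)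
    have A: "mult_op a \<circ> comm (us ! 0) (us ! j) \<in> Diff1 \<iota>"
      using der1_mult[OF cD] True der1_Diff1 by blast
    have B: "mult_op (- (us ! j) a) \<circ> us ! 0 \<in> Diff1 \<iota>"
      using der1_mult[OF x0] der1_Diff1 by blast
    have RD: "set (del_nth i (del_nth j us)) \<subseteq> Diff1 \<iota>" using R der1_Diff1 by blast
    have 1: "\<omega> (op_add (mult_op a \<circ> comm (us ! 0) (us ! j)) (mult_op (- (us ! j) a) \<circ> us ! 0) # del_nth i (del_nth j us)) 1
       = \<omega> ((mult_op a \<circ> comm (us ! 0) (us ! j)) # del_nth i (del_nth j us)) 1 +
         \<omega> ((mult_op (- (us ! j) a) \<circ> us ! 0) # del_nth i (del_nth j us)) 1"
      by (rule om_add0[OF R(1) RD A B])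
    have 2: "\<omega> ((mult_op a \<circ> comm (us ! 0) (us ! j)) # del_nth i (del_nth j us)) 1 =
        a * \<omega> (comm (us ! i) (us ! j) # del_nth i (del_nth j us)) 1"
      using om_lin0[OF L, of a 1] True by simp
    have hd: "us ! 0 # del_nth 0 (del_nth j us) = del_nth j us"
    proof -
      have "del_nth j us \<noteq> []" using us ij by (metis del_nth_length diff_Suc_1 length_0_conv n1 not_one_le_zero)
      moreover have "hd (del_nth j us) = us ! 0" using ij us True
        by (cases us; cases j) (auto simp: del_nth_def)
      ultimately show ?thesis by (metis del_nth_0 list.collapse)
    qed
    have L2: "length (us ! 0 # del_nth i (del_nth j us)) = n" "set (us ! 0 # del_nth i (del_nth j us)) \<subseteq> Der1 \<iota>"
      using R x0 n1 by auto
    have 3: "\<omega> ((mult_op (- (us ! j) a) \<circ> us ! 0) # del_nth i (del_nth j us)) 1 = - ((us ! j) a * cv j)"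
    proof -
      have "\<omega> ((mult_op (- (us ! j) a) \<circ> us ! 0) # del_nth i (del_nth j us)) 1 =
          - (us ! j) a * \<omega> (us ! 0 # del_nth i (del_nth j us)) 1"
        using om_lin0[OF L2, of "- (us ! j) a" 1] by simp
      also have "us ! 0 # del_nth i (del_nth j us) = del_nth j us" using hd True by simp
      finally show ?thesis by (simp add: cv_def o_def)
    qed
    show ?thesis unfolding e1 d c 1 2 3 using True by simp
  next
    case False
    have e1: "us[0 := Yv] ! i = us ! i" "us[0 := Yv] ! j = us ! j" using False ij us by auto
    have d: "del_nth i (del_nth j (us[0 := Yv])) = (del_nth i (del_nth j us))[0 := Yv]"
      using False ij us by (simp add: del_nth_update)
    have h0: "del_nth i (del_nth j us) ! 0 = us ! 0" using False ij us by (simp add: del_nth_nth)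
    have n2: "n \<ge> 2" using False ij by simp
    have e2: "comm (us ! i) (us ! j) # (del_nth i (del_nth j us))[0 := Yv] =
      (comm (us ! i) (us ! j) # del_nth i (del_nth j us))[1 := mult_op a \<circ> (comm (us ! i) (us ! j) # del_nth i (del_nth j us)) ! 1]"
      by (simp add: h0 Yv_def)
    show ?thesis unfolding e1 d e2 using om_lin1[OF L n2, of a 1] False by simp
  qed
qed

lemma d_val_lin: "d_val \<omega> (us[0 := Yv]) = a * d_val \<omega> us"
proof -
  define E where "E i = (-1) ^ i * (if i = 0 then 0 else (us ! i) a * cv i)" for i
  have 1: "(\<Sum>i<Suc n. (-1) ^ i * (us[0 := Yv] ! i) (\<omega> (del_nth i (us[0 := Yv])) 1)) =
      a * (\<Sum>i<Suc n. (-1) ^ i * (us ! i) (\<omega> (del_nth i us) 1)) + (\<Sum>i<Suc n. E i)"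
    unfolding sum_distrib_left sum.distrib[symmetric]
    by (rule sum.cong) (auto simp: termA E_def cv_def algebra_simps)
  have inner: "(\<Sum>i<j. (-1) ^ (i + j) * \<omega> (comm (us[0 := Yv] ! i) (us[0 := Yv] ! j) # del_nth i (del_nth j (us[0 := Yv]))) 1)
     = a * (\<Sum>i<j. (-1) ^ (i + j) * \<omega> (comm (us ! i) (us ! j) # del_nth i (del_nth j us)) 1) - E j"
    if j: "j < Suc n" for j
  proof -
    have "(\<Sum>i<j. (-1) ^ (i + j) * \<omega> (comm (us[0 := Yv] ! i) (us[0 := Yv] ! j) # del_nth i (del_nth j (us[0 := Yv]))) 1)
      = (\<Sum>i<j. a * ((-1) ^ (i + j) * \<omega> (comm (us ! i) (us ! j) # del_nth i (del_nth j us)) 1) +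
           (if i = 0 then (-1) ^ j * (- ((us ! j) a * cv j)) else 0))"
    proof (rule sum.cong)
      fix i assume "i \<in> {..<j}"
      then have ij: "i < j" by simp
      show "(-1) ^ (i + j) * \<omega> (comm (us[0 := Yv] ! i) (us[0 := Yv] ! j) # del_nth i (del_nth j (us[0 := Yv]))) 1 =
          a * ((-1) ^ (i + j) * \<omega> (comm (us ! i) (us ! j) # del_nth i (del_nth j us)) 1) +
           (if i = 0 then (-1) ^ j * (- ((us ! j) a * cv j)) else 0)"
        unfolding termB[OF ij j] by (cases "i = 0") (simp_all add: algebra_simps)
    qed simp
    also have "\<dots> = a * (\<Sum>i<j. (-1) ^ (i + j) * \<omega> (comm (us ! i) (us ! j) # del_nth i (del_nth j us)) 1) +
         (if 0 < j then (-1) ^ j * (- ((us ! j) a * cv j)) else 0)"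
      by (simp add: sum.distrib sum_distrib_left sum.delta)
    also have "\<dots> = a * (\<Sum>i<j. (-1) ^ (i + j) * \<omega> (comm (us ! i) (us ! j) # del_nth i (del_nth j us)) 1) - E j"
      by (simp add: E_def)
    finally show ?thesis .
  qed
  have 2: "(\<Sum>j<Suc n. \<Sum>i<j. (-1) ^ (i + j) * \<omega> (comm (us[0 := Yv] ! i) (us[0 := Yv] ! j) # del_nth i (del_nth j (us[0 := Yv]))) 1)
     = a * (\<Sum>j<Suc n. \<Sum>i<j. (-1) ^ (i + j) * \<omega> (comm (us ! i) (us ! j) # del_nth i (del_nth j us)) 1) - (\<Sum>j<Suc n. E j)"
    unfolding sum_distrib_left sum_subtractf[symmetric]
  proof (rule sum.cong)
    fix j assume "j \<in> {..<Suc n}"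
    then have j: "j < Suc n" by simp
    show "(\<Sum>i<j. (-1) ^ (i + j) * \<omega> (comm (us[0 := Yv] ! i) (us[0 := Yv] ! j) # del_nth i (del_nth j (us[0 := Yv]))) 1) =
       (\<Sum>i<j. a * ((-1) ^ (i + j) * \<omega> (comm (us ! i) (us ! j) # del_nth i (del_nth j us)) 1)) - E j"
      unfolding inner[OF j] sum_distrib_left ..
  qed simp
  show ?thesis unfolding d_val_alt length_list_update us(1) 1 2 by (simp add: algebra_simps)
qed

end


end

theorem theorem1:
  fixes \<iota> :: "'k::field \<Rightarrow> 'a::comm_ring_1"
    and n :: nat
    and \<omega> :: "('a \<Rightarrow> 'a) list \<Rightarrow> ('a \<Rightarrow> 'a)"
  assumes "K_algebra \<iota>"
    and "n \<ge> 1"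
    and "Omega \<iota> n \<omega>"
  shows "Omega \<iota> (Suc n) (bracket 2 n mu \<omega>) \<and>
         (\<forall>Xs. length Xs = Suc n \<and> set Xs \<subseteq> Der1 \<iota> \<longrightarrow>
            bracket 2 n mu \<omega> Xs = mult_op (- d_val \<omega> Xs))"
proof -
  note n1 = assms(2) and om = assms(3)
  let ?B = "bracket 2 n mu \<omega>"
  have cf: "\<And>us. length us = Suc n \<Longrightarrow> ?B us = G \<omega> us" using closed_form n1 by blast
  have Gder: "\<And>us. length us = Suc n \<Longrightarrow> set us \<subseteq> Der1 \<iota> \<Longrightarrow> ?B us = mult_op (- d_val \<omega> us)"
    using cf G_der[OF n1 om] by simp
  have Gadd: "\<And>us i u v. length us = Suc n \<Longrightarrow> set us \<subseteq> Diff1 \<iota> \<Longrightarrow> i < Suc n \<Longrightarrow>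
      u \<in> Diff1 \<iota> \<Longrightarrow> v \<in> Diff1 \<iota> \<Longrightarrow>
      G \<omega> (us[i := op_add u v]) = op_add (G \<omega> (us[i := u])) (G \<omega> (us[i := v]))"
    using G_add[OF n1 om] by blast
  have Galt: "\<And>us i j. length us = Suc n \<Longrightarrow> set us \<subseteq> Diff1 \<iota> \<Longrightarrow> i < j \<Longrightarrow> j < Suc n \<Longrightarrow>
      us ! i = us ! j \<Longrightarrow> G \<omega> us = (\<lambda>b. 0)"
  proof -
    fix us i j
    assume a: "length us = Suc n" "set us \<subseteq> Diff1 \<iota>" "i < j" "j < Suc n" "us ! i = us ! j"
    show "G \<omega> us = (\<lambda>b. 0)"
    proof (rule alt_all[of "Diff1 \<iota>" "Suc n" "G \<omega>", where us = us and i = i and j = j])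
      show "\<And>u v. u \<in> Diff1 \<iota> \<Longrightarrow> v \<in> Diff1 \<iota> \<Longrightarrow> op_add u v \<in> Diff1 \<iota>" by (rule op_add_Diff1)
      show "\<And>us i u v. length us = Suc n \<Longrightarrow> set us \<subseteq> Diff1 \<iota> \<Longrightarrow> i < Suc n \<Longrightarrow>
        u \<in> Diff1 \<iota> \<Longrightarrow> v \<in> Diff1 \<iota> \<Longrightarrow>
        G \<omega> (us[i := op_add u v]) = op_add (G \<omega> (us[i := u])) (G \<omega> (us[i := v]))" by (rule Gadd)
      show "\<And>us i. length us = Suc n \<Longrightarrow> set us \<subseteq> Diff1 \<iota> \<Longrightarrow> Suc i < Suc n \<Longrightarrow>
        us ! i = us ! Suc i \<Longrightarrow> G \<omega> us = (\<lambda>b. 0)"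
        by (rule ext, rule G_adj[OF n1 om]) auto
    qed (use a in auto)
  qed
  have lk: "Lk \<iota> (Suc n) ?B"
    unfolding Lk_def
  proof (intro conjI allI impI)
    fix us assume a: "length us = Suc n \<and> set us \<subseteq> Diff1 \<iota>"
    show "?B us \<in> Diff1 \<iota>" using a cf G_val[OF n1 om] mult_op_Diff1 by metis
  next
    fix us i u v
    assume a: "length us = Suc n \<and> set us \<subseteq> Diff1 \<iota> \<and> i < Suc n \<and> u \<in> Diff1 \<iota> \<and> v \<in> Diff1 \<iota>"
    show "?B (us[i := op_add u v]) = op_add (?B (us[i := u])) (?B (us[i := v]))"
      using a cf Gadd by simp
  next
    fix us i c u
    assume a: "length us = Suc n \<and> set us \<subseteq> Diff1 \<iota> \<and> i < Suc n \<and> u \<in> Diff1 \<iota>"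
    show "?B (us[i := op_scale \<iota> c u]) = op_scale \<iota> c (?B (us[i := u]))"
      using a cf G_scale[OF n1 om] by simp
  next
    fix us i j
    assume a: "length us = Suc n \<and> set us \<subseteq> Diff1 \<iota> \<and> i < j \<and> j < Suc n \<and> us ! i = us ! j"
    show "?B us = (\<lambda>b. 0)" using a cf Galt[of us i j] by simp
  qed
  have vals: "\<forall>us. length us = Suc n \<and> set us \<subseteq> Diff1 \<iota> \<longrightarrow> (\<exists>a. ?B us = mult_op a)"
    using cf G_val[OF n1 om] by metis
  have van: "\<forall>us. length us = Suc n \<and> set us \<subseteq> Diff1 \<iota> \<and> (\<exists>i<Suc n. us ! i \<in> range mult_op) \<longrightarrow>
      ?B us = (\<lambda>b. 0)"
  proof (intro allI impI)
    fix us assume a: "length us = Suc n \<and> set us \<subseteq> Diff1 \<iota> \<and> (\<exists>i<Suc n. us ! i \<in> range mult_op)"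
    then obtain i c where i: "i < Suc n" "us ! i = mult_op c" by blast
    show "?B us = (\<lambda>b. 0)" using a i cf G_vanish[OF n1 om] by auto
  qed
  have lin: "\<forall>a us. length us = Suc n \<and> set us \<subseteq> Der1 \<iota> \<and> 0 < Suc n \<longrightarrow>
      ?B (us[0 := mult_op a \<circ> us ! 0]) = mult_op a \<circ> ?B us"
  proof (intro allI impI)
    fix a us assume a: "length us = Suc n \<and> set us \<subseteq> Der1 \<iota> \<and> 0 < Suc n"
    have "us ! 0 \<in> Der1 \<iota>" using a by auto
    then have s: "set (us[0 := mult_op a \<circ> us ! 0]) \<subseteq> Der1 \<iota>" using a der1_mult set_upd_sub by metis
    have "?B (us[0 := mult_op a \<circ> us ! 0]) = mult_op (- d_val \<omega> (us[0 := mult_op a \<circ> us ! 0]))"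
      using Gder s a by simp
    also have "d_val \<omega> (us[0 := mult_op a \<circ> us ! 0]) = a * d_val \<omega> us"
      using d_val_lin[OF n1 om, where us = us and a = a] Yv_def[OF n1 om, where us = us and a = a] a by simp
    finally have 1: "?B (us[0 := mult_op a \<circ> us ! 0]) = mult_op (- (a * d_val \<omega> us))" .
    have 2: "?B us = mult_op (- d_val \<omega> us)" using Gder a by simp
    have 3: "mult_op (- (a * d_val \<omega> us)) = mult_op a \<circ> mult_op (- d_val \<omega> us)"
      by (simp add: mult_op_def fun_eq_iff)
    show "?B (us[0 := mult_op a \<circ> us ! 0]) = mult_op a \<circ> ?B us"
      unfolding 1 2 3 ..
  qed
  have "Omega \<iota> (Suc n) ?B" unfolding Omega_def using lk vals van lin by blast
  moreover have "\<forall>Xs. length Xs = Suc n \<and> set Xs \<subseteq> Der1 \<iota> \<longrightarrow> ?B Xs = mult_op (- d_val \<omega> Xs)"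
    using Gder by blast
  ultimately show ?thesis by blast
qed


end
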